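(* Assume A1, A2 and R2. Then $\sup_{\theta\in\Theta}\sup_{x\in\mathsf X}|H(x,\theta)|\le\sqrt2\sup_{(0,1)}\rho$. Moreover, for every $\theta\in\Theta$ there exists a unique function $\widehat H_\theta:\mathsf X\to\mathbb R^d$ solving the Poisson equation $$\widehat H_\theta-P^\rho_\theta\widehat H_\theta=H(\cdot,\theta)-h(\theta),\qquad \int\widehat H_\theta\,\pi^\rho_\theta\,d\lambda=0;$$ it satisfies $\sup_{\theta\in\Theta,x\in\mathsf X}|\widehat H_\theta(x)|<\infty$, and there is a constant $C$ such that for all $\theta,\theta'\in\Theta$, $$\sup_{\mathsf X}\Big\{|\widehat H_\theta-\widehat H_{\theta'}|+|P^\rho_\theta\widehat H_\theta-P^\rho_{\theta'}\widehat H_{\theta'}|\Big\}\le C\Big(|\theta-\theta'|+\sum_{i=1}^d\Big|1-\frac{\rho(\theta'(i))}{\rho(\theta(i))}\Big|\Big).$$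
   Context: Let $\mathsf X\subset\mathbb R^D$ be measurable, $\lambda$ a nonnegative reference measure, $\pi$ a probability density on $\mathsf X$ w.r.t. $\lambda$. $\mathsf X=\bigcup_{i=1}^d\mathsf X_i$ is a partition into disjoint measurable strata, $I(x)=i$ iff $x\in\mathsf X_i$, $\theta_\star(i)=\int_{\mathsf X_i}\pi\,d\lambda$, $\Theta=\{\theta\in(0,1)^d:\sum_i\theta(i)=1\}$. For measurable $\rho:(0,1)\to(0,\infty)$ and $\theta\in\Theta$, $\pi^\rho_\theta(x)=(Z^\rho_\theta)^{-1}\sum_{i}\frac{\pi(x)}{\rho(\theta(i))}\mathbf 1_{\mathsf X_i}(x)$, $Z^\rho_\theta=\sum_i\frac{\theta_\star(i)}{\rho(\theta(i))}$. A1: $\sup_{\mathsf X}\pi<\infty$ and $\min_i\theta_\star(i)>0$. A2: for every $\theta\in\Theta$, $P^\rho_\theta$ is the Metropolis–Hastings kernel with symmetric proposal density $q(x,y)$ w.r.t. $\lambda$, $\inf_{\mathsf X^2}q>0$, and invariant distribution $\pi^\rho_\theta\,d\lambda$. R2: $\sup_{(0,1)}\rho<\infty$. $H:\mathsf X\times\Theta\to\mathbb R^d$ has components $H_i(x,\theta)=\rho(\theta(i))\mathbf 1_{\mathsf X_i}(x)-\theta(i)\rho(\theta(I(x)))$, and $h(\theta)=\int_{\mathsf X}H(x,\theta)\pi^\rho_\theta(x)\lambda(dx)=(\theta_\star-\theta)/Z^\rho_\theta$. $|\cdot|$ denotes the Euclidean norm; kernels act componentwise on vector-valued functions. *)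

theory Defs
  imports "HOL-Analysis.Analysis" "HOL-Probability.Probability"
begin

text \<open>Strata are indexed by a finite type 'd (so d = CARD('d)); a stratum index map
  I sends x to the index of the stratum containing x.  Vectors in R^d are real^'d.\<close>

definition Theta :: "(real^'d) set" where
  "Theta = {\<theta>. (\<forall>i. 0 < \<theta>$i \<and> \<theta>$i < 1) \<and> (\<Sum>i\<in>UNIV. \<theta>$i) = 1}"

definition theta_star :: "'a measure \<Rightarrow> ('a \<Rightarrow> real) \<Rightarrow> ('a \<Rightarrow> 'd::finite) \<Rightarrow> real^'d" where
  "theta_star lam dens I = (\<chi> i. (\<integral>x. dens x * indicator {x\<in>space lam. I x = i} x \<partial>lam))"

definition Zrho :: "'a measure \<Rightarrow> ('a \<Rightarrow> real) \<Rightarrow> ('a \<Rightarrow> 'd::finite) \<Rightarrow> (real \<Rightarrow> real) \<Rightarrow> real^'d \<Rightarrow> real" where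
  "Zrho lam dens I rho \<theta> = (\<Sum>i\<in>UNIV. theta_star lam dens I $ i / rho (\<theta>$i))"

definition pi_rho :: "'a measure \<Rightarrow> ('a \<Rightarrow> real) \<Rightarrow> ('a \<Rightarrow> 'd::finite) \<Rightarrow> (real \<Rightarrow> real) \<Rightarrow> real^'d \<Rightarrow> 'a \<Rightarrow> real" where
  "pi_rho lam dens I rho \<theta> x = dens x / rho (\<theta> $ I x) / Zrho lam dens I rho \<theta>"

definition Hfield :: "(real \<Rightarrow> real) \<Rightarrow> ('a \<Rightarrow> 'd::finite) \<Rightarrow> 'a \<Rightarrow> real^'d \<Rightarrow> real^'d" where
  "Hfield rho I x \<theta> = (\<chi> i. rho (\<theta>$i) * (if I x = i then 1 else 0) - \<theta>$i * rho (\<theta> $ I x))"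

definition hmean :: "'a measure \<Rightarrow> ('a \<Rightarrow> real) \<Rightarrow> ('a \<Rightarrow> 'd::finite) \<Rightarrow> (real \<Rightarrow> real) \<Rightarrow> real^'d \<Rightarrow> real^'d" where
  "hmean lam dens I rho \<theta> = (\<integral>x. pi_rho lam dens I rho \<theta> x *\<^sub>R Hfield rho I x \<theta> \<partial>lam)"

text \<open>Metropolis--Hastings acceptance probability for target density p and a symmetric
  proposal (the usual convention: acceptance 1 when the current density vanishes).\<close>
definition mh_accept :: "('a \<Rightarrow> real) \<Rightarrow> 'a \<Rightarrow> 'a \<Rightarrow> real" where
  "mh_accept p x y = (if 0 < p x then min 1 (p y / p x) else 1)"

definition mh_apply :: "'a measure \<Rightarrow> ('a \<Rightarrow> 'a \<Rightarrow> real) \<Rightarrow> ('a \<Rightarrow> real) \<Rightarrow> ('a \<Rightarrow> 'b::{banach,second_countable_topology}) \<Rightarrow> 'a \<Rightarrow> 'b" where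
  "mh_apply lam q p f x =
     (\<integral>y. (mh_accept p x y * q x y) *\<^sub>R f y \<partial>lam)
     + (1 - (\<integral>y. mh_accept p x y * q x y \<partial>lam)) *\<^sub>R f x"

definition solves_poisson where
  "solves_poisson lam q dens I rho \<theta> g \<longleftrightarrow>
     (\<forall>x\<in>space lam. g x - mh_apply lam q (pi_rho lam dens I rho \<theta>) g x
                     = Hfield rho I x \<theta> - hmean lam dens I rho \<theta>)
   \<and> (\<integral>x. pi_rho lam dens I rho \<theta> x *\<^sub>R g x \<partial>lam) = 0"

end

theory Submission
  imports Defs
begin


locale MHset =
  fixes X :: "(real^'D) set"
    and lam :: "(real^'D) measure"
    and dens :: "real^'D \<Rightarrow> real"
    and I :: "real^'D \<Rightarrow> 'd::finite"
    and rho :: "real \<Rightarrow> real"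
    and q :: "real^'D \<Rightarrow> real^'D \<Rightarrow> real"
  assumes lam_space: "space lam = X"
    and pi_meas: "dens \<in> borel_measurable lam"
    and pi_nonneg: "\<forall>x\<in>X. 0 \<le> dens x"
    and pi_int: "integrable lam dens"
    and pi_prob: "(\<integral>x. dens x \<partial>lam) = 1"
    and strata_meas: "\<forall>i. {x\<in>X. I x = i} \<in> sets lam"
    and rho_pos: "\<forall>t\<in>{0<..<1}. 0 < rho t"
    and A1_bdd: "bdd_above (dens ` X)"
    and A1_strata: "\<forall>i. 0 < theta_star lam dens I $ i"
    and q_meas: "(\<lambda>(x, y). q x y) \<in> borel_measurable (lam \<Otimes>\<^sub>M lam)"
    and q_nonneg: "\<forall>x\<in>X. \<forall>y\<in>X. 0 \<le> q x y"
    and q_density: "\<forall>x\<in>X. integrable lam (q x) \<and> (\<integral>y. q x y \<partial>lam) = 1"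
    and q_sym: "\<forall>x\<in>X. \<forall>y\<in>X. q x y = q y x"
    and q_inf: "\<exists>c>0. \<forall>x\<in>X. \<forall>y\<in>X. c \<le> q x y"
    and R2: "bdd_above (rho ` {0<..<1})"
begin

definition "cq = (SOME c. c > 0 \<and> (\<forall>x\<in>X. \<forall>y\<in>X. c \<le> q x y))"

lemma cq: "cq > 0" "\<And>x y. x\<in>X \<Longrightarrow> y\<in>X \<Longrightarrow> cq \<le> q x y"
  using someI_ex[OF q_inf] unfolding cq_def by auto

lemma X_ne: "X \<noteq> {}"
proof
  assume "X = {}"
  then have "space lam = {}" using lam_space by simp
  then have "(\<integral>x. dens x \<partial>lam) = 0" by (simp add: Bochner_Integration.integral_empty)
  then show False using pi_prob by simp
qed

lemma emeas_fin: "emeasure lam X < \<infinity>"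
proof -
  obtain x0 where x0: "x0 \<in> X" using X_ne by auto
  have "(\<integral>\<^sup>+y. ennreal (q x0 y) \<partial>lam) = ennreal 1"
    using q_density x0 q_nonneg lam_space
    by (subst nn_integral_eq_integral) auto
  moreover have "(\<integral>\<^sup>+y. ennreal cq \<partial>lam) \<le> (\<integral>\<^sup>+y. ennreal (q x0 y) \<partial>lam)"
    using cq(2)[OF x0] by (intro nn_integral_mono ennreal_leI) (simp add: lam_space)
  ultimately have "ennreal cq * emeasure lam X \<le> 1"
    using lam_space by (simp add: nn_integral_const)
  then show ?thesis using cq(1)
    by (metis ennreal_eq_0_iff ennreal_mult_eq_top_iff ennreal_one_neq_top infinity_ennreal_def less_le not_le top.extremum_unique top_greatest)
qed

lemma fin: "finite_measure lam"
  by (rule finite_measureI) (use emeas_fin lam_space in auto)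

sublocale finite_measure lam by (rule fin)

lemma I_meas[measurable]: "I \<in> measurable lam (count_space UNIV)"
proof -
  have "countable (UNIV :: 'd set)" by simp
  then show ?thesis
    apply (subst measurable_count_space_eq2_countable)
    using strata_meas lam_space
    by (auto simp: vimage_def Int_def conj_commute)
qed

abbreviation "ts \<equiv> theta_star lam dens I"
abbreviation "Z \<equiv> Zrho lam dens I rho"
abbreviation "p \<equiv> pi_rho lam dens I rho"

definition "Dmax = Sup (dens ` X)"
definition "Rmax = Sup (rho ` {0<..<1})"
definition "tmin = Min (range (\<lambda>i. ts $ i))"
definition "K = max 1 (Dmax / tmin)"
definition "eps = min (1/2) (cq / K)"

lemma dens_le: "x \<in> X \<Longrightarrow> dens x \<le> Dmax"
  unfolding Dmax_def using A1_bdd by (intro cSup_upper) auto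

lemma Dmax_nonneg: "0 \<le> Dmax"
  using X_ne dens_le pi_nonneg by (meson all_not_in_conv order_trans)

lemma tmin: "0 < tmin" "\<And>i. tmin \<le> ts $ i"
  unfolding tmin_def using A1_strata by auto

lemma K: "1 \<le> K" "0 < K" "Dmax / tmin \<le> K"
  unfolding K_def by auto

lemma eps: "0 < eps" "eps \<le> 1/2" "eps \<le> cq / K"
proof -
  show "0 < eps" unfolding eps_def using cq(1) K by auto
  show "eps \<le> 1/2" unfolding eps_def by (rule min.cobounded1)
  show "eps \<le> cq / K" unfolding eps_def by (rule min.cobounded2)
qed

lemma rho_le: "t \<in> {0<..<1} \<Longrightarrow> rho t \<le> Rmax"
  unfolding Rmax_def using R2 by (intro cSup_upper) auto

lemma Theta_D: "\<theta> \<in> Theta \<Longrightarrow> 0 < \<theta>$i \<and> \<theta>$i < 1"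
  unfolding Theta_def by auto

lemma rho_th: "\<theta> \<in> Theta \<Longrightarrow> 0 < rho (\<theta>$i) \<and> rho (\<theta>$i) \<le> Rmax"
  using Theta_D[of \<theta> i] rho_pos rho_le by auto

lemma Rmax_pos: "0 < Rmax"
proof -
  have "(1/2::real) \<in> {0<..<1}" by auto
  then show ?thesis using rho_pos rho_le by (meson less_le_trans)
qed

lemma Z_ge: "\<theta> \<in> Theta \<Longrightarrow> ts$j / rho (\<theta>$j) \<le> Z \<theta>"
  unfolding Zrho_def
  by (rule member_le_sum[of j UNIV "\<lambda>i. ts$i / rho (\<theta>$i)"])
     (use A1_strata rho_th in \<open>auto intro: divide_nonneg_pos less_imp_le\<close>)

lemma Z_pos: "\<theta> \<in> Theta \<Longrightarrow> 0 < Z \<theta>"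
  using Z_ge[of \<theta> undefined] A1_strata[rule_format, of undefined] rho_th[of \<theta> undefined]
  by (meson divide_pos_pos less_le_trans)

lemma p_nonneg: "\<theta> \<in> Theta \<Longrightarrow> x \<in> X \<Longrightarrow> 0 \<le> p \<theta> x"
  unfolding pi_rho_def using pi_nonneg rho_th[of \<theta> "I x"] Z_pos[of \<theta>] by (auto intro!: divide_nonneg_pos)

lemma p_le: "\<theta> \<in> Theta \<Longrightarrow> x \<in> X \<Longrightarrow> p \<theta> x \<le> K"
proof -
  assume th: "\<theta> \<in> Theta" and x: "x \<in> X"
  let ?j = "I x"
  have r: "0 < rho (\<theta>$?j)" using rho_th[OF th] by auto
  have z: "ts$?j / rho (\<theta>$?j) \<le> Z \<theta>" by (rule Z_ge[OF th])
  have t: "0 < ts$?j" using A1_strata by auto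
  have "p \<theta> x = dens x / (rho (\<theta>$?j) * Z \<theta>)" unfolding pi_rho_def by simp
  also have "\<dots> \<le> dens x / (rho (\<theta>$?j) * (ts$?j / rho (\<theta>$?j)))"
    using r z t pi_nonneg x Z_pos[OF th]
    by (intro divide_left_mono mult_left_mono) (auto intro!: mult_pos_pos divide_pos_pos)
  also have "\<dots> = dens x / ts$?j" using r by simp
  also have "\<dots> \<le> Dmax / tmin"
    using dens_le[OF x] tmin t pi_nonneg x Dmax_nonneg by (intro frac_le) auto
  also have "\<dots> \<le> K" by (rule K)
  finally show ?thesis .
qed

lemma rhoI_meas[measurable]: "(\<lambda>x. f (I x) :: real) \<in> borel_measurable lam"
  by (rule measurable_compose[OF I_meas]) simp

lemma p_meas[measurable]: "p \<theta> \<in> borel_measurable lam"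
  unfolding pi_rho_def by (intro borel_measurable_divide pi_meas rhoI_meas borel_measurable_const)

lemma p_sum: "x \<in> X \<Longrightarrow> p \<theta> x = (\<Sum>i\<in>UNIV. (1 / (rho (\<theta>$i) * Z \<theta>)) * (dens x * indicator {x\<in>X. I x = i} x))"
proof -
  assume x: "x \<in> X"
  have "(\<Sum>i\<in>UNIV. (1 / (rho (\<theta>$i) * Z \<theta>)) * (dens x * indicator {x\<in>X. I x = i} x))
      = (\<Sum>i\<in>UNIV. if I x = i then (1 / (rho (\<theta>$i) * Z \<theta>)) * dens x else 0)"
    using x by (intro sum.cong) (auto simp: indicator_def)
  also have "\<dots> = (1 / (rho (\<theta>$I x) * Z \<theta>)) * dens x" by (simp add: sum.delta)
  finally show ?thesis unfolding pi_rho_def by simp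
qed

lemma p_int: "\<theta> \<in> Theta \<Longrightarrow> integrable lam (p \<theta>) \<and> (\<integral>x. p \<theta> x \<partial>lam) = 1"
proof -
  assume th: "\<theta> \<in> Theta"
  let ?g = "\<lambda>x. (\<Sum>i\<in>UNIV. (1 / (rho (\<theta>$i) * Z \<theta>)) * (dens x * indicator {x\<in>X. I x = i} x))"
  have ii: "\<And>i. integrable lam (\<lambda>x. dens x * indicator {x\<in>X. I x = i} x)"
    using strata_meas pi_int by (intro integrable_real_mult_indicator) auto
  have ig: "integrable lam ?g" using ii by auto
  have eq: "\<And>x. x \<in> space lam \<Longrightarrow> p \<theta> x = ?g x" using p_sum lam_space by auto
  have eqv: "integrable lam (p \<theta>) = integrable lam ?g" by (rule Bochner_Integration.integrable_cong[OF refl eq])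
  have "integrable lam (p \<theta>)" using eqv ig by blast
  moreover have "(\<integral>x. p \<theta> x \<partial>lam) = (\<integral>x. ?g x \<partial>lam)" using Bochner_Integration.integral_cong[OF refl eq] by simp
  moreover have "(\<integral>x. ?g x \<partial>lam) = (\<Sum>i\<in>UNIV. (1 / (rho (\<theta>$i) * Z \<theta>)) * ts $ i)"
    using ii by (simp add: integral_sum theta_star_def lam_space)
  moreover have "\<dots> = (\<Sum>i\<in>UNIV. ts $ i / rho (\<theta>$i)) / Z \<theta>"
    by (simp add: sum_divide_distrib)
  moreover have "\<dots> = 1" using Z_pos[OF th] unfolding Zrho_def by simp
  ultimately show ?thesis by simp
qed

end


context MHset begin

definition good :: "(real^'D \<Rightarrow> real) \<Rightarrow> bool" where
  "good pp \<longleftrightarrow> pp \<in> borel_measurable lam \<and> (\<forall>x\<in>X. 0 \<le> pp x \<and> pp x \<le> K)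
     \<and> integrable lam pp \<and> integral\<^sup>L lam pp = 1"

lemma good_p: "\<theta> \<in> Theta \<Longrightarrow> good (p \<theta>)"
  unfolding good_def using p_meas p_nonneg p_le p_int by auto

definition bdd :: "(real^'D \<Rightarrow> 'b::{banach,second_countable_topology}) \<Rightarrow> real \<Rightarrow> bool" where
  "bdd v S \<longleftrightarrow> v \<in> borel_measurable lam \<and> (\<forall>x\<in>X. norm (v x) \<le> S)"

lemma q_meas_y[measurable]: "x \<in> X \<Longrightarrow> q x \<in> borel_measurable lam"
  using q_density by auto

lemma acc01: "good pp \<Longrightarrow> x \<in> X \<Longrightarrow> y \<in> X \<Longrightarrow> 0 \<le> mh_accept pp x y \<and> mh_accept pp x y \<le> 1"
  unfolding good_def mh_accept_def by (auto simp: min_def)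

lemma acc_meas_y[measurable]: "good pp \<Longrightarrow> mh_accept pp x \<in> borel_measurable lam"
proof -
  assume "good pp"
  then have [measurable]: "pp \<in> borel_measurable lam" unfolding good_def by auto
  show ?thesis unfolding mh_accept_def by measurable
qed

lemma acc_meas2: "good pp \<Longrightarrow> (\<lambda>(x, y). mh_accept pp x y * q x y) \<in> borel_measurable (lam \<Otimes>\<^sub>M lam)"
proof -
  assume "good pp"
  then have [measurable]: "pp \<in> borel_measurable lam" unfolding good_def by auto
  have [measurable]: "(\<lambda>(x, y). q x y) \<in> borel_measurable (lam \<Otimes>\<^sub>M lam)" by (rule q_meas)
  show ?thesis unfolding mh_accept_def by measurable
qed

lemma minor: "good pp \<Longrightarrow> x \<in> X \<Longrightarrow> y \<in> X \<Longrightarrow> eps * pp y \<le> mh_accept pp x y * q x y"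
proof -
  assume g: "good pp" and x: "x \<in> X" and y: "y \<in> X"
  have px: "0 \<le> pp x" "pp x \<le> K" and py: "0 \<le> pp y" "pp y \<le> K" using g x y unfolding good_def by auto
  have qq: "cq \<le> q x y" using cq(2) x y .
  have e: "eps \<le> cq / K" "0 < eps" using eps by auto
  have "eps * pp y \<le> cq / K * pp y" using e py by (intro mult_right_mono) auto
  also have "\<dots> \<le> cq * mh_accept pp x y"
  proof (cases "0 < pp x")
    case True
    have "pp y / K \<le> min 1 (pp y / pp x)"
      using True px py K by (auto intro: divide_left_mono)
    then have "cq * (pp y / K) \<le> cq * min 1 (pp y / pp x)" using cq(1) by (intro mult_left_mono) auto
    then show ?thesis using True unfolding mh_accept_def by simp
  next
    case False
    have "pp y / K \<le> 1" using py K by auto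
    then have "cq * (pp y / K) \<le> cq * 1" using cq(1) by (intro mult_left_mono) auto
    then show ?thesis using False unfolding mh_accept_def by simp
  qed
  also have "\<dots> \<le> mh_accept pp x y * q x y"
  proof -
    have "cq * mh_accept pp x y \<le> q x y * mh_accept pp x y"
      using acc01[OF g x y] qq by (intro mult_right_mono) auto
    then show ?thesis by (simp add: mult.commute)
  qed
  finally show ?thesis .
qed

lemma dbal: "good pp \<Longrightarrow> x \<in> X \<Longrightarrow> y \<in> X \<Longrightarrow> pp x * mh_accept pp x y = min (pp x) (pp y)"
proof -
  assume g: "good pp" and x: "x \<in> X" and y: "y \<in> X"
  have px: "0 \<le> pp x" and py: "0 \<le> pp y" using g x y unfolding good_def by auto
  show ?thesis
  proof (cases "0 < pp x")
    case True
    then show ?thesis unfolding mh_accept_def by (auto simp: min_def field_simps)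
  next
    case False
    then show ?thesis using px py unfolding mh_accept_def by (auto simp: min_def)
  qed
qed

lemma int_aqv: "good pp \<Longrightarrow> bdd v S \<Longrightarrow> x \<in> X \<Longrightarrow>
  integrable lam (\<lambda>y. (mh_accept pp x y * q x y) *\<^sub>R v y)"
proof -
  assume g: "good pp" and b: "bdd v S" and x: "x \<in> X"
  have [measurable]: "v \<in> borel_measurable lam" using b unfolding bdd_def by auto
  have [measurable]: "mh_accept pp x \<in> borel_measurable lam" using acc_meas_y[OF g] .
  have [measurable]: "q x \<in> borel_measurable lam" using q_meas_y[OF x] .
  show ?thesis
  proof (rule Bochner_Integration.integrable_bound[where f="\<lambda>y. S * q x y"])
    show "integrable lam (\<lambda>y. S * q x y)" using q_density x by auto
    show "(\<lambda>y. (mh_accept pp x y * q x y) *\<^sub>R v y) \<in> borel_measurable lam" by measurable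
    show "AE y in lam. norm ((mh_accept pp x y * q x y) *\<^sub>R v y) \<le> norm (S * q x y)"
    proof (rule AE_I2)
      fix y assume y: "y \<in> space lam"
      then have y': "y \<in> X" using lam_space by simp
      have a: "0 \<le> mh_accept pp x y" "mh_accept pp x y \<le> 1" using acc01[OF g x y'] by auto
      have qq: "0 \<le> q x y" using q_nonneg x y' by auto
      have nv: "norm (v y) \<le> S" using b y' unfolding bdd_def by auto
      have "norm ((mh_accept pp x y * q x y) *\<^sub>R v y) = mh_accept pp x y * q x y * norm (v y)"
        using a qq by simp
      also have "\<dots> \<le> q x y * S"
      proof -
        have "mh_accept pp x y * q x y \<le> q x y" using a qq by (simp add: mult_left_le_one_le)
        then have "mh_accept pp x y * q x y * norm (v y) \<le> q x y * norm (v y)"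
          by (intro mult_right_mono) auto
        also have "\<dots> \<le> q x y * S" using qq nv by (intro mult_left_mono) auto
        finally show ?thesis .
      qed
      also have "\<dots> \<le> norm (S * q x y)" by (simp add: mult.commute)
      finally show "norm ((mh_accept pp x y * q x y) *\<^sub>R v y) \<le> norm (S * q x y)" .
    qed
  qed
qed

lemma int_aq: "good pp \<Longrightarrow> x \<in> X \<Longrightarrow> integrable lam (\<lambda>y. mh_accept pp x y * q x y)"
  using int_aqv[of pp "\<lambda>_. 1::real" 1 x] unfolding bdd_def by simp

lemma aq_int_bounds: "good pp \<Longrightarrow> x \<in> X \<Longrightarrow>
  0 \<le> (\<integral>y. mh_accept pp x y * q x y \<partial>lam) \<and> (\<integral>y. mh_accept pp x y * q x y \<partial>lam) \<le> 1"
proof -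
  assume g: "good pp" and x: "x \<in> X"
  have "(\<integral>y. mh_accept pp x y * q x y \<partial>lam) \<le> (\<integral>y. q x y \<partial>lam)"
    using int_aq[OF g x] q_density x acc01[OF g x] q_nonneg lam_space
    by (intro integral_mono) (auto intro: mult_left_le_one_le)
  moreover have "0 \<le> (\<integral>y. mh_accept pp x y * q x y \<partial>lam)"
    using acc01[OF g x] q_nonneg x lam_space by (intro integral_nonneg_AE AE_I2) auto
  ultimately show ?thesis using q_density x by auto
qed

lemma bdd_nonneg: "bdd v S \<Longrightarrow> 0 \<le> S"
  using X_ne unfolding bdd_def by (meson ex_in_conv norm_ge_zero order_trans)

lemma bdd_meas[measurable]: "bdd v S \<Longrightarrow> v \<in> borel_measurable lam"
  unfolding bdd_def by auto

lemma bdd_le: "bdd v S \<Longrightarrow> x \<in> X \<Longrightarrow> norm (v x) \<le> S"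
  unfolding bdd_def by auto

lemma int_bdd: "f \<in> borel_measurable lam \<Longrightarrow> (\<And>x. x \<in> X \<Longrightarrow> norm (f x) \<le> B) \<Longrightarrow> integrable lam f"
  for f :: "real^'D \<Rightarrow> 'b::{banach,second_countable_topology}"
  by (rule Bochner_Integration.integrable_bound[where f="\<lambda>_. B"])
     (auto simp: lam_space intro!: AE_I2 order_trans[OF _ abs_ge_self])

lemma good_D: "good pp \<Longrightarrow> pp \<in> borel_measurable lam" "good pp \<Longrightarrow> x \<in> X \<Longrightarrow> 0 \<le> pp x"
  "good pp \<Longrightarrow> x \<in> X \<Longrightarrow> pp x \<le> K" "good pp \<Longrightarrow> integrable lam pp" "good pp \<Longrightarrow> integral\<^sup>L lam pp = 1"
  unfolding good_def by auto

lemma int_pv: "good pp \<Longrightarrow> bdd v S \<Longrightarrow> integrable lam (\<lambda>y. pp y *\<^sub>R v y)"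
proof -
  assume g: "good pp" and b: "bdd v S"
  have [measurable]: "pp \<in> borel_measurable lam" "v \<in> borel_measurable lam" using good_D(1)[OF g] bdd_meas[OF b] by auto
  show ?thesis
  proof (rule int_bdd[where B="K * S"])
    fix x assume x: "x \<in> X"
    show "norm (pp x *\<^sub>R v x) \<le> K * S"
      using good_D(2,3)[OF g x] bdd_le[OF b x] bdd_nonneg[OF b] by (simp add: mult_mono)
  qed measurable
qed

lemma P_meas[measurable]: "good pp \<Longrightarrow> bdd v S \<Longrightarrow> (\<lambda>x. mh_apply lam q pp v x) \<in> borel_measurable lam"
proof -
  assume g: "good pp" and b: "bdd v S"
  have [measurable]: "v \<in> borel_measurable lam" using bdd_meas[OF b] .
  have [measurable]: "(\<lambda>(x, y). mh_accept pp x y * q x y) \<in> borel_measurable (lam \<Otimes>\<^sub>M lam)"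
    using acc_meas2[OF g] .
  have [measurable]: "(\<lambda>(x, y). (mh_accept pp x y * q x y) *\<^sub>R v y) \<in> borel_measurable (lam \<Otimes>\<^sub>M lam)"
    by measurable
  show ?thesis unfolding mh_apply_def by measurable
qed

lemma P_norm: "good pp \<Longrightarrow> bdd v S \<Longrightarrow> x \<in> X \<Longrightarrow> norm (mh_apply lam q pp v x) \<le> S"
proof -
  assume g: "good pp" and b: "bdd v S" and x: "x \<in> X"
  define A where "A = (\<integral>y. mh_accept pp x y * q x y \<partial>lam)"
  have A: "0 \<le> A" "A \<le> 1" using aq_int_bounds[OF g x] unfolding A_def by auto
  have "norm (\<integral>y. (mh_accept pp x y * q x y) *\<^sub>R v y \<partial>lam) \<le> (\<integral>y. (mh_accept pp x y * q x y) * S \<partial>lam)"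
  proof (rule Bochner_Integration.integral_norm_bound_integral)
    show "integrable lam (\<lambda>y. (mh_accept pp x y * q x y) *\<^sub>R v y)" by (rule int_aqv[OF g b x])
    show "integrable lam (\<lambda>y. mh_accept pp x y * q x y * S)" using int_aq[OF g x] by auto
    fix y assume "y \<in> space lam"
    then have y: "y \<in> X" using lam_space by simp
    show "norm ((mh_accept pp x y * q x y) *\<^sub>R v y) \<le> mh_accept pp x y * q x y * S"
      using acc01[OF g x y] q_nonneg x y bdd_le[OF b y] by (auto intro: mult_left_mono)
  qed
  also have "\<dots> = A * S" unfolding A_def by simp
  finally have i1: "norm (\<integral>y. (mh_accept pp x y * q x y) *\<^sub>R v y \<partial>lam) \<le> A * S" .
  have i2: "norm ((1 - A) *\<^sub>R v x) \<le> (1 - A) * S" using A bdd_le[OF b x] by (auto intro: mult_left_mono)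
  have "norm (mh_apply lam q pp v x) \<le> A * S + (1 - A) * S"
    unfolding mh_apply_def A_def[symmetric] by (rule norm_triangle_le) (use i1 i2 in linarith)
  then show ?thesis by (simp add: algebra_simps)
qed

lemma Q_norm: "good pp \<Longrightarrow> bdd v S \<Longrightarrow> x \<in> X \<Longrightarrow>
   norm (mh_apply lam q pp v x - eps *\<^sub>R (\<integral>y. pp y *\<^sub>R v y \<partial>lam)) \<le> (1 - eps) * S"
proof -
  assume g: "good pp" and b: "bdd v S" and x: "x \<in> X"
  define A where "A = (\<integral>y. mh_accept pp x y * q x y \<partial>lam)"
  have A: "0 \<le> A" "A \<le> 1" using aq_int_bounds[OF g x] unfolding A_def by auto
  have ipv: "integrable lam (\<lambda>y. pp y *\<^sub>R v y)" by (rule int_pv[OF g b])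
  have iav: "integrable lam (\<lambda>y. (mh_accept pp x y * q x y) *\<^sub>R v y)" by (rule int_aqv[OF g b x])
  have eq: "(\<integral>y. (mh_accept pp x y * q x y) *\<^sub>R v y \<partial>lam) - eps *\<^sub>R (\<integral>y. pp y *\<^sub>R v y \<partial>lam)
      = (\<integral>y. (mh_accept pp x y * q x y - eps * pp y) *\<^sub>R v y \<partial>lam)"
    using ipv iav by (simp add: scaleR_diff_left scaleR_scaleR[symmetric] del: scaleR_scaleR)
  have "norm (\<integral>y. (mh_accept pp x y * q x y - eps * pp y) *\<^sub>R v y \<partial>lam)
     \<le> (\<integral>y. (mh_accept pp x y * q x y - eps * pp y) * S \<partial>lam)"
  proof (rule Bochner_Integration.integral_norm_bound_integral)
    show "integrable lam (\<lambda>y. (mh_accept pp x y * q x y - eps * pp y) *\<^sub>R v y)"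
      using ipv iav by (simp add: scaleR_diff_left scaleR_scaleR[symmetric] del: scaleR_scaleR)
    show "integrable lam (\<lambda>y. (mh_accept pp x y * q x y - eps * pp y) * S)"
      using int_aq[OF g x] good_D(4)[OF g] by auto
    fix y assume "y \<in> space lam"
    then have y: "y \<in> X" using lam_space by simp
    show "norm ((mh_accept pp x y * q x y - eps * pp y) *\<^sub>R v y) \<le> (mh_accept pp x y * q x y - eps * pp y) * S"
      using minor[OF g x y] bdd_le[OF b y] by (auto intro: mult_left_mono)
  qed
  also have "\<dots> = (A - eps) * S"
    using int_aq[OF g x] good_D(4,5)[OF g] unfolding A_def by (simp add: left_diff_distrib)
  finally have i1: "norm (\<integral>y. (mh_accept pp x y * q x y - eps * pp y) *\<^sub>R v y \<partial>lam) \<le> (A - eps) * S" .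
  have i2: "norm ((1 - A) *\<^sub>R v x) \<le> (1 - A) * S" using A bdd_le[OF b x] by (auto intro: mult_left_mono)
  have eqn: "mh_apply lam q pp v x - eps *\<^sub>R (\<integral>y. pp y *\<^sub>R v y \<partial>lam)
     = (\<integral>y. (mh_accept pp x y * q x y - eps * pp y) *\<^sub>R v y \<partial>lam) + (1 - A) *\<^sub>R v x"
    unfolding mh_apply_def A_def[symmetric] eq[symmetric] by simp
  have "norm (mh_apply lam q pp v x - eps *\<^sub>R (\<integral>y. pp y *\<^sub>R v y \<partial>lam)) \<le> (A - eps) * S + (1 - A) * S"
    unfolding eqn by (rule norm_triangle_le) (use i1 i2 in linarith)
  then show ?thesis by (simp add: algebra_simps)
qed

lemma P_diff: "good pp \<Longrightarrow> bdd v S \<Longrightarrow> bdd w T \<Longrightarrow> x \<in> X \<Longrightarrow>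
  mh_apply lam q pp (\<lambda>y. v y - w y) x = mh_apply lam q pp v x - mh_apply lam q pp w x"
proof -
  assume g: "good pp" and b: "bdd v S" and b2: "bdd w T" and x: "x \<in> X"
  have iv: "integrable lam (\<lambda>y. (mh_accept pp x y * q x y) *\<^sub>R v y)" by (rule int_aqv[OF g b x])
  have iw: "integrable lam (\<lambda>y. (mh_accept pp x y * q x y) *\<^sub>R w y)" by (rule int_aqv[OF g b2 x])
  show ?thesis unfolding mh_apply_def
    using iv iw by (simp add: scaleR_diff_right algebra_simps)
qed

lemma invar: "good pp \<Longrightarrow> bdd v S \<Longrightarrow>
  (\<integral>x. pp x *\<^sub>R mh_apply lam q pp v x \<partial>lam) = (\<integral>x. pp x *\<^sub>R v x \<partial>lam)"
proof -
  assume g: "good pp" and b: "bdd v S"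
  interpret PS: pair_sigma_finite lam lam ..
  have [measurable]: "v \<in> borel_measurable lam" using bdd_meas[OF b] .
  have [measurable]: "pp \<in> borel_measurable lam" using good_D(1)[OF g] .
  have [measurable]: "(\<lambda>(x, y). mh_accept pp x y * q x y) \<in> borel_measurable (lam \<Otimes>\<^sub>M lam)"
    using acc_meas2[OF g] .
  define F where "F = (\<lambda>x y. (pp x * (mh_accept pp x y * q x y)) *\<^sub>R v y)"
  have Fm[measurable]: "(\<lambda>(x, y). F x y) \<in> borel_measurable (lam \<Otimes>\<^sub>M lam)"
    unfolding F_def by measurable
  have Fx: "x \<in> X \<Longrightarrow> integrable lam (F x)" for x
  proof -
    assume x: "x \<in> X"
    have "integrable lam (\<lambda>y. pp x *\<^sub>R ((mh_accept pp x y * q x y) *\<^sub>R v y))"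
      using int_aqv[OF g b x] by (rule integrable_scaleR_right)
    then show ?thesis unfolding F_def by simp
  qed
  have Fint: "integrable (lam \<Otimes>\<^sub>M lam) (\<lambda>(x, y). F x y)"
  proof (rule PS.Fubini_integrable)
    show "(\<lambda>(x, y). F x y) \<in> borel_measurable (lam \<Otimes>\<^sub>M lam)" by (rule Fm)
    show "AE x in lam. integrable lam (\<lambda>y. case (x, y) of (x, y) \<Rightarrow> F x y)"
      using Fx by (auto intro!: AE_I2 simp: lam_space)
    show "integrable lam (\<lambda>x. \<integral>y. norm (case (x, y) of (x, y) \<Rightarrow> F x y) \<partial>lam)"
    proof (rule int_bdd[where B="K * S"])
      show "(\<lambda>x. \<integral>y. norm (case (x, y) of (x, y) \<Rightarrow> F x y) \<partial>lam) \<in> borel_measurable lam"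
        by measurable
      fix x assume x: "x \<in> X"
      have "(\<integral>y. norm (F x y) \<partial>lam) \<le> (\<integral>y. K * S * q x y \<partial>lam)"
      proof (rule integral_mono)
        show "integrable lam (\<lambda>y. norm (F x y))" using Fx[OF x] by auto
        show "integrable lam (\<lambda>y. K * S * q x y)" using q_density x by auto
        fix y assume "y \<in> space lam"
        then have y: "y \<in> X" using lam_space by simp
        have a: "0 \<le> mh_accept pp x y" "mh_accept pp x y \<le> 1" using acc01[OF g x y] by auto
        have qq: "0 \<le> q x y" using q_nonneg x y by auto
        have pk: "0 \<le> pp x" "pp x \<le> K" using good_D(2,3)[OF g x] by auto
        have nv: "norm (v y) \<le> S" using bdd_le[OF b y] .
        have "norm (F x y) = pp x * (mh_accept pp x y * q x y) * norm (v y)"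
          unfolding F_def using a qq pk by simp
        also have "\<dots> \<le> K * q x y * S"
        proof (rule mult_mono)
          have "mh_accept pp x y * q x y \<le> q x y" using a qq by (simp add: mult_left_le_one_le)
          then show "pp x * (mh_accept pp x y * q x y) \<le> K * q x y"
            using pk a qq by (intro mult_mono) auto
        qed (use nv pk qq in auto)
        finally show "norm (F x y) \<le> K * S * q x y" by (simp add: algebra_simps)
      qed
      also have "\<dots> = K * S" using q_density x by simp
      finally show "norm (\<integral>y. norm (case (x, y) of (x, y) \<Rightarrow> F x y) \<partial>lam) \<le> K * S" by simp
    qed
  qed
  have i1: "integrable lam (\<lambda>x. \<integral>y. F x y \<partial>lam)"
    using PS.integrable_fst'[OF Fint] by simp
  have i2: "integrable lam (\<lambda>x. \<integral>y. F y x \<partial>lam)"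
    using PS.integrable_snd[of F] Fint by simp
  have i3: "integrable lam (\<lambda>x. pp x *\<^sub>R v x)" by (rule int_pv[OF g b])
  have pt: "pp x *\<^sub>R mh_apply lam q pp v x = (\<integral>y. F x y \<partial>lam) + pp x *\<^sub>R v x - (\<integral>y. F y x \<partial>lam)"
    if x: "x \<in> X" for x
  proof -
    define A where "A = (\<integral>y. mh_accept pp x y * q x y \<partial>lam)"
    have e1: "pp x *\<^sub>R (\<integral>y. (mh_accept pp x y * q x y) *\<^sub>R v y \<partial>lam) = (\<integral>y. F x y \<partial>lam)"
      unfolding F_def by (simp add: scaleR_scaleR[symmetric] del: scaleR_scaleR)
    have "(\<integral>y. F y x \<partial>lam) = (\<integral>y. (pp x * (mh_accept pp x y * q x y)) *\<^sub>R v x \<partial>lam)"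
    proof (rule Bochner_Integration.integral_cong[OF refl])
      fix y assume "y \<in> space lam"
      then have y: "y \<in> X" using lam_space by simp
      have "pp y * (mh_accept pp y x * q y x) = pp x * (mh_accept pp x y * q x y)"
        using dbal[OF g x y] dbal[OF g y x] q_sym x y
        by (metis min.commute mult.assoc)
      then show "F y x = (pp x * (mh_accept pp x y * q x y)) *\<^sub>R v x" unfolding F_def by simp
    qed
    also have "\<dots> = (\<integral>y. pp x * (mh_accept pp x y * q x y) \<partial>lam) *\<^sub>R v x"
      using int_aq[OF g x] by (intro integral_scaleR_left) auto
    also have "\<dots> = (pp x * A) *\<^sub>R v x" unfolding A_def by simp
    finally have e2: "(\<integral>y. F y x \<partial>lam) = (pp x * A) *\<^sub>R v x" .
    show ?thesis unfolding mh_apply_def A_def[symmetric] e2 e1[symmetric]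
      by (simp add: scaleR_add_right algebra_simps)
  qed
  have "(\<integral>x. pp x *\<^sub>R mh_apply lam q pp v x \<partial>lam)
      = (\<integral>x. (\<integral>y. F x y \<partial>lam) + pp x *\<^sub>R v x - (\<integral>y. F y x \<partial>lam) \<partial>lam)"
    using pt by (intro Bochner_Integration.integral_cong[OF refl]) (auto simp: lam_space)
  also have "\<dots> = (\<integral>x. (\<integral>y. F x y \<partial>lam) \<partial>lam) + (\<integral>x. pp x *\<^sub>R v x \<partial>lam) - (\<integral>x. (\<integral>y. F y x \<partial>lam) \<partial>lam)"
    using i1 i2 i3 by simp
  also have "(\<integral>x. (\<integral>y. F y x \<partial>lam) \<partial>lam) = (\<integral>x. (\<integral>y. F x y \<partial>lam) \<partial>lam)"
    using PS.Fubini_integral[of F] Fint by simp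
  finally show ?thesis by simp
qed

end


context MHset begin

lemma sup_trick:
  fixes u :: "real^'D \<Rightarrow> 'b::real_normed_vector"
  assumes B0: "\<forall>x\<in>X. norm (u x) \<le> B0"
    and H: "\<And>S x. (\<forall>y\<in>X. norm (u y) \<le> S) \<Longrightarrow> x \<in> X \<Longrightarrow> norm (u x) \<le> a + b * S"
    and b: "0 \<le> b" "b < 1"
  shows "\<forall>x\<in>X. norm (u x) \<le> a / (1 - b)"
proof -
  define S0 where "S0 = (SUP y\<in>X. norm (u y))"
  have bdd: "bdd_above ((\<lambda>y. norm (u y)) ` X)" using B0 by (auto intro: bdd_aboveI2)
  have up: "\<forall>y\<in>X. norm (u y) \<le> S0" unfolding S0_def using bdd by (auto intro: cSUP_upper)
  have "S0 \<le> a + b * S0" unfolding S0_def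
    using X_ne H[OF up] by (subst S0_def[symmetric]) (auto intro!: cSUP_least)
  then have "S0 * (1 - b) \<le> a" by (simp add: algebra_simps)
  then have "S0 \<le> a / (1 - b)" using b by (simp add: field_simps)
  then show ?thesis using up by auto
qed

definition Top :: "(real^'D \<Rightarrow> real) \<Rightarrow> (real^'D \<Rightarrow> 'b::{banach,second_countable_topology}) \<Rightarrow> (real^'D \<Rightarrow> 'b) \<Rightarrow> real^'D \<Rightarrow> 'b" where
  "Top pp f v = (\<lambda>x. f x + mh_apply lam q pp v x - eps *\<^sub>R (\<integral>y. pp y *\<^sub>R v y \<partial>lam))"

lemma Top_bdd: "good pp \<Longrightarrow> bdd f Sf \<Longrightarrow> bdd v S \<Longrightarrow> bdd (Top pp f v) (Sf + (1 - eps) * S)"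
proof -
  assume g: "good pp" and bf: "bdd f Sf" and b: "bdd v S"
  have [measurable]: "f \<in> borel_measurable lam" using bdd_meas[OF bf] .
  have [measurable]: "(\<lambda>x. mh_apply lam q pp v x) \<in> borel_measurable lam" using P_meas[OF g b] .
  have m: "Top pp f v \<in> borel_measurable lam" unfolding Top_def by measurable
  have "norm (Top pp f v x) \<le> Sf + (1 - eps) * S" if x: "x \<in> X" for x
  proof -
    have eq: "Top pp f v x = f x + (mh_apply lam q pp v x - eps *\<^sub>R (\<integral>y. pp y *\<^sub>R v y \<partial>lam))"
      unfolding Top_def by (simp add: algebra_simps)
    show ?thesis unfolding eq
      by (rule norm_triangle_le) (use bdd_le[OF bf x] Q_norm[OF g b x] in linarith)
  qed
  then show ?thesis using m unfolding bdd_def by auto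
qed

lemma P_zero: "mh_apply lam q pp (\<lambda>_. 0::'b::{banach,second_countable_topology}) x = 0"
  unfolding mh_apply_def by simp

lemma bdd_diff: "bdd v S \<Longrightarrow> bdd w T \<Longrightarrow> bdd (\<lambda>x. v x - w x) (S + T)"
  unfolding bdd_def by (auto intro: norm_triangle_le_diff add_mono)

lemma Top_diff: "good pp \<Longrightarrow> bdd v S \<Longrightarrow> bdd w T \<Longrightarrow> x \<in> X \<Longrightarrow>
  Top pp f v x - Top pp f w x = mh_apply lam q pp (\<lambda>y. v y - w y) x - eps *\<^sub>R (\<integral>y. pp y *\<^sub>R (v y - w y) \<partial>lam)"
proof -
  assume g: "good pp" and b: "bdd v S" and b2: "bdd w T" and x: "x \<in> X"
  show ?thesis unfolding Top_def P_diff[OF g b b2 x]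
    using int_pv[OF g b] int_pv[OF g b2] by (simp add: scaleR_diff_right algebra_simps)
qed

lemma poisson_unique:
  assumes g: "good pp" and b1: "bdd g1 S1" and b2: "bdd g2 S2"
    and e1: "\<forall>x\<in>X. g1 x - mh_apply lam q pp g1 x = f x" and z1: "(\<integral>x. pp x *\<^sub>R g1 x \<partial>lam) = 0"
    and e2: "\<forall>x\<in>X. g2 x - mh_apply lam q pp g2 x = f x" and z2: "(\<integral>x. pp x *\<^sub>R g2 x \<partial>lam) = 0"
  shows "\<forall>x\<in>X. g1 x = g2 x"
proof -
  define u where "u = (\<lambda>x. g1 x - g2 x)"
  have bu: "bdd u (S1 + S2)" unfolding u_def by (rule bdd_diff[OF b1 b2])
  have zu: "(\<integral>x. pp x *\<^sub>R u x \<partial>lam) = 0"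
    unfolding u_def using int_pv[OF g b1] int_pv[OF g b2] z1 z2 by (simp add: scaleR_diff_right)
  have ux: "u x = mh_apply lam q pp u x - eps *\<^sub>R (\<integral>x. pp x *\<^sub>R u x \<partial>lam)" if x: "x \<in> X" for x
  proof -
    have a1: "g1 x = f x + mh_apply lam q pp g1 x" using e1 x by (simp add: diff_eq_eq)
    have a2: "g2 x = f x + mh_apply lam q pp g2 x" using e2 x by (simp add: diff_eq_eq)
    have "u x = mh_apply lam q pp g1 x - mh_apply lam q pp g2 x"
      unfolding u_def by (subst a1, subst a2) simp
    then show ?thesis using P_diff[OF g b1 b2 x] zu unfolding u_def by simp
  qed
  have "\<forall>x\<in>X. norm (u x) \<le> 0 / (1 - (1 - eps))"
  proof (rule sup_trick)
    show "\<forall>x\<in>X. norm (u x) \<le> S1 + S2" using bu unfolding bdd_def by auto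
    fix S x assume S: "\<forall>y\<in>X. norm (u y) \<le> S" and x: "x \<in> X"
    have bS: "bdd u S" using S bu unfolding bdd_def by auto
    show "norm (u x) \<le> 0 + (1 - eps) * S" using Q_norm[OF g bS x] ux[OF x] by simp
  qed (use eps in auto)
  then show ?thesis unfolding u_def by auto
qed

lemma geom_sum_bound:
  fixes a :: "nat \<Rightarrow> 'b::banach"
  assumes a: "\<And>n. norm (a n) \<le> r ^ n * C" and r: "0 \<le> r" "r < 1"
  shows "summable a \<and> norm (suminf a) \<le> C / (1 - r)"
proof -
  have sg: "summable (\<lambda>n. r ^ n * C)" using r by (intro summable_mult2 summable_geometric) auto
  have sa: "summable (\<lambda>n. norm (a n))"
    by (rule summable_comparison_test[OF _ sg]) (use a in auto)
  have "norm (suminf a) \<le> (\<Sum>n. norm (a n))" by (rule summable_norm[OF sa])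
  also have "\<dots> \<le> (\<Sum>n. r ^ n * C)" by (rule suminf_le[OF _ sa sg]) (use a in auto)
  also have "\<dots> = C / (1 - r)" using suminf_geometric[of r] r
    by (simp add: suminf_mult2[symmetric] divide_simps)
  finally show ?thesis using summable_norm_cancel[OF sa] by auto
qed

lemma poisson_exists:
  fixes f :: "real^'D \<Rightarrow> 'b::{banach,second_countable_topology}"
  assumes g: "good pp" and bf: "bdd f Sf" and zf: "(\<integral>x. pp x *\<^sub>R f x \<partial>lam) = 0"
  shows "\<exists>h. bdd h (Sf / eps) \<and> (\<forall>x\<in>X. h x - mh_apply lam q pp h x = f x)
             \<and> (\<integral>x. pp x *\<^sub>R h x \<partial>lam) = 0"
proof -
  define r where "r = 1 - eps"
  have r: "0 \<le> r" "r < 1" "1 - r = eps" using eps unfolding r_def by auto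
  have Sf: "0 \<le> Sf" using bdd_nonneg[OF bf] .
  define G where "G n = (Top pp f ^^ n) (\<lambda>_. 0)" for n
  have G0: "G 0 = (\<lambda>_. 0)" unfolding G_def by simp
  have GS: "G (Suc n) = Top pp f (G n)" for n unfolding G_def by simp
  have Gb: "\<exists>S. bdd (G n) S" for n
  proof (induction n)
    case 0 show ?case unfolding G0 bdd_def by auto
  next
    case (Suc n)
    then obtain S where "bdd (G n) S" by auto
    then show ?case unfolding GS using Top_bdd[OF g bf] by blast
  qed
  have Gm[measurable]: "G n \<in> borel_measurable lam" for n using Gb[of n] bdd_meas by blast
  define d where "d n = (\<lambda>x. G (Suc n) x - G n x)" for n
  have db: "bdd (d n) (r ^ n * Sf)" for n
  proof (induction n)
    case 0
    have "d 0 = f" unfolding d_def GS G0 Top_def by (simp add: P_zero)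
    then show ?case using bf by simp
  next
    case (Suc n)
    obtain S1 where S1: "bdd (G (Suc n)) S1" using Gb by blast
    obtain S0 where S0: "bdd (G n) S0" using Gb by blast
    have m: "d (Suc n) \<in> borel_measurable lam" unfolding d_def by measurable
    have "norm (d (Suc n) x) \<le> r ^ Suc n * Sf" if x: "x \<in> X" for x
    proof -
      have "d (Suc n) x = Top pp f (G (Suc n)) x - Top pp f (G n) x" by (simp add: d_def GS)
      also have "\<dots> = mh_apply lam q pp (\<lambda>y. G (Suc n) y - G n y) x
          - eps *\<^sub>R (\<integral>y. pp y *\<^sub>R (G (Suc n) y - G n y) \<partial>lam)"
        by (rule Top_diff[OF g S1 S0 x])
      finally have "d (Suc n) x = mh_apply lam q pp (d n) x - eps *\<^sub>R (\<integral>y. pp y *\<^sub>R d n y \<partial>lam)"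
        unfolding d_def .
      then have "norm (d (Suc n) x) \<le> (1 - eps) * (r ^ n * Sf)"
        using Q_norm[OF g Suc.IH x] by simp
      then show ?thesis unfolding r_def by simp
    qed
    then show ?case using m unfolding bdd_def by auto
  qed
  define h where "h x = (\<Sum>n. d n x)" for x
  have Gsum: "G n x = (\<Sum>k<n. d k x)" for n x
    unfolding d_def using sum_lessThan_telescope[of "\<lambda>k. G k x" n] by (simp add: G0)
  have tail: "norm (h x - G n x) \<le> r ^ n * Sf / eps" if x: "x \<in> X" for x n
  proof -
    have b: "\<And>k. norm (d (k + n) x) \<le> r ^ k * (r ^ n * Sf)"
    proof -
      fix k
      have "norm (d (k + n) x) \<le> r ^ (k + n) * Sf" using bdd_le[OF db x] .
      then show "norm (d (k + n) x) \<le> r ^ k * (r ^ n * Sf)" by (simp add: power_add mult_ac)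
    qed
    have gs: "summable (\<lambda>k. d (k + n) x) \<and> norm (\<Sum>k. d (k + n) x) \<le> r ^ n * Sf / (1 - r)"
      by (rule geom_sum_bound[OF b r(1,2)])
    then have sd: "summable (\<lambda>k. d k x)" using summable_iff_shift[of "\<lambda>k. d k x" n] by simp
    have "h x = (\<Sum>k. d (k + n) x) + (\<Sum>k<n. d k x)"
      unfolding h_def using suminf_split_initial_segment[OF sd, of n] by simp
    then have "h x - G n x = (\<Sum>k. d (k + n) x)" unfolding Gsum by simp
    then show ?thesis using gs r by simp
  qed
  have conv: "(\<lambda>n. G n x) \<longlonglongrightarrow> h x" if x: "x \<in> X" for x
  proof -
    have b: "\<And>k. norm (d k x) \<le> r ^ k * Sf" using db x unfolding bdd_def by simp
    have "summable (\<lambda>k. d k x)" using geom_sum_bound[OF b r(1,2)] by simp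
    then show ?thesis unfolding Gsum h_def by (rule summable_LIMSEQ)
  qed
  have hm[measurable]: "h \<in> borel_measurable lam"
    by (rule borel_measurable_LIMSEQ_metric[OF Gm]) (use conv lam_space in auto)
  have hb: "bdd h (Sf / eps)" unfolding bdd_def using tail[of _ 0] by (simp add: G0)
  have Ghb: "bdd (\<lambda>x. G n x - h x) (r ^ n * Sf / eps)" for n
    unfolding bdd_def using tail by (auto simp: norm_minus_commute)
  have fixp: "h x = Top pp f h x" if x: "x \<in> X" for x
  proof -
    have bnd: "norm (h x - Top pp f h x) \<le> 2 * (Sf / eps) * r ^ Suc n" for n
    proof -
      obtain S0 where S0: "bdd (G n) S0" using Gb by metis
      have e: "h x - Top pp f h x = (h x - G (Suc n) x) + (Top pp f (G n) x - Top pp f h x)"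
        unfolding GS by simp
      have t2: "norm (Top pp f (G n) x - Top pp f h x) \<le> (1 - eps) * (r ^ n * Sf / eps)"
        unfolding Top_diff[OF g S0 hb x] using Q_norm[OF g Ghb x] by simp
      have "norm (h x - Top pp f h x) \<le> r ^ Suc n * Sf / eps + (1 - eps) * (r ^ n * Sf / eps)"
        unfolding e by (rule norm_triangle_le) (use tail[OF x, of "Suc n"] t2 in linarith)
      then show ?thesis unfolding r_def by (simp add: field_simps)
    qed
    have lim: "(\<lambda>n. 2 * (Sf / eps) * r ^ Suc n) \<longlonglongrightarrow> 0"
      using r by (intro tendsto_mult_right_zero LIMSEQ_power_zero[THEN LIMSEQ_Suc]) auto
    have "norm (h x - Top pp f h x) \<le> 0"
      by (rule tendsto_le[OF sequentially_bot lim tendsto_const]) (use bnd in auto)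
    then show ?thesis by simp
  qed
  define c where "c = (\<integral>x. pp x *\<^sub>R h x \<partial>lam)"
  have bP: "bdd (\<lambda>x. mh_apply lam q pp h x) (Sf / eps)"
    unfolding bdd_def using P_meas[OF g hb] P_norm[OF g hb] by auto
  have ipf: "integrable lam (\<lambda>x. pp x *\<^sub>R f x)" by (rule int_pv[OF g bf])
  have ipP: "integrable lam (\<lambda>x. pp x *\<^sub>R mh_apply lam q pp h x)" by (rule int_pv[OF g bP])
  have ipc: "integrable lam (\<lambda>x. pp x *\<^sub>R (eps *\<^sub>R c))"
    using good_D(4)[OF g] by (rule integrable_scaleR_left)
  have "c = (\<integral>x. pp x *\<^sub>R f x + pp x *\<^sub>R mh_apply lam q pp h x - pp x *\<^sub>R (eps *\<^sub>R c) \<partial>lam)"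
  proof (subst c_def, rule Bochner_Integration.integral_cong[OF refl])
    fix x assume "x \<in> space lam"
    then have x: "x \<in> X" using lam_space by simp
    show "pp x *\<^sub>R h x = pp x *\<^sub>R f x + pp x *\<^sub>R mh_apply lam q pp h x - pp x *\<^sub>R (eps *\<^sub>R c)"
      using fixp[OF x] unfolding Top_def c_def[symmetric]
      by (metis scaleR_add_right scaleR_diff_right)
  qed
  also have "\<dots> = (\<integral>x. pp x *\<^sub>R f x \<partial>lam) + (\<integral>x. pp x *\<^sub>R mh_apply lam q pp h x \<partial>lam)
       - (\<integral>x. pp x *\<^sub>R (eps *\<^sub>R c) \<partial>lam)"
    using ipf ipP ipc by simp
  also have "(\<integral>x. pp x *\<^sub>R (eps *\<^sub>R c) \<partial>lam) = eps *\<^sub>R c"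
    using good_D(4,5)[OF g] by simp
  finally have "c = c - eps *\<^sub>R c" unfolding zf invar[OF g hb] c_def by simp
  then have c0: "c = 0" using eps by simp
  show ?thesis
  proof (intro exI conjI)
    show "bdd h (Sf / eps)" by (rule hb)
    show "\<forall>x\<in>X. h x - mh_apply lam q pp h x = f x"
      using fixp c0 unfolding Top_def c_def[symmetric] by (metis add_diff_cancel_right' diff_zero scale_zero_right)
    show "(\<integral>x. pp x *\<^sub>R h x \<partial>lam) = 0" using c0 unfolding c_def .
  qed
qed

end


context MHset begin

abbreviation "HF x \<theta> \<equiv> Hfield rho I x \<theta>"

lemma HF_comp: "HF x \<theta> $ i = rho (\<theta>$i) * (if I x = i then 1 else 0) - \<theta>$i * rho (\<theta> $ I x)"
  unfolding Hfield_def by simp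

lemma Theta_sum: "\<theta> \<in> Theta \<Longrightarrow> (\<Sum>i\<in>UNIV. \<theta>$i) = 1"
  unfolding Theta_def by auto

lemma HF_norm: assumes th: "\<theta> \<in> Theta" shows "norm (HF x \<theta>) \<le> sqrt 2 * Rmax"
proof -
  let ?j = "I x"
  let ?v = "HF x \<theta>"
  have rj: "0 < rho (\<theta>$?j)" "rho (\<theta>$?j) \<le> Rmax" using rho_th[OF th] by auto
  have tj: "0 < \<theta>$?j" "\<theta>$?j < 1" using Theta_D[OF th] by auto
  have s: "(\<Sum>i\<in>UNIV. (?v$i)^2) = (?v$?j)^2 + (\<Sum>i\<in>UNIV-{?j}. (?v$i)^2)"
    by (simp add: sum.remove)
  have vj: "?v$?j = rho (\<theta>$?j) * (1 - \<theta>$?j)" unfolding HF_comp by (simp add: algebra_simps)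
  have vi: "i \<in> UNIV-{?j} \<Longrightarrow> (?v$i)^2 \<le> rho (\<theta>$?j)^2 * \<theta>$i" for i
  proof -
    assume "i \<in> UNIV-{?j}"
    then have "?v$i = - (\<theta>$i * rho (\<theta>$?j))" unfolding HF_comp by auto
    then have "(?v$i)^2 = rho (\<theta>$?j)^2 * (\<theta>$i * \<theta>$i)" by (simp add: power2_eq_square)
    also have "\<dots> \<le> rho (\<theta>$?j)^2 * \<theta>$i"
      using Theta_D[OF th, of i] by (intro mult_left_mono) (auto simp: mult_le_cancel_left1 less_imp_le)
    finally show ?thesis .
  qed
  have "(\<Sum>i\<in>UNIV-{?j}. (?v$i)^2) \<le> (\<Sum>i\<in>UNIV-{?j}. rho (\<theta>$?j)^2 * \<theta>$i)"
    by (rule sum_mono) (rule vi)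
  also have "\<dots> = rho (\<theta>$?j)^2 * (1 - \<theta>$?j)"
    using Theta_sum[OF th] by (simp add: sum_distrib_left[symmetric] sum_diff1)
  also have "\<dots> \<le> rho (\<theta>$?j)^2" using tj by (intro mult_left_le) auto
  finally have s2: "(\<Sum>i\<in>UNIV-{?j}. (?v$i)^2) \<le> rho (\<theta>$?j)^2" .
  have "(?v$?j)^2 \<le> rho (\<theta>$?j)^2" unfolding vj using tj rj
    by (simp add: power_mult_distrib power_le_one mult_le_cancel_left1)
  then have "(\<Sum>i\<in>UNIV. (?v$i)^2) \<le> 2 * Rmax^2"
    using s s2 rj power_mono[of "rho (\<theta>$?j)" Rmax 2] by linarith
  then have "sqrt (\<Sum>i\<in>UNIV. (?v$i)^2) \<le> sqrt (2 * Rmax^2)" by (rule real_sqrt_le_mono)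
  also have "\<dots> = sqrt 2 * Rmax" using Rmax_pos by (simp add: real_sqrt_mult)
  finally show ?thesis unfolding norm_vec_def L2_set_def by simp
qed

lemma HF_meas[measurable]: "(\<lambda>x. HF x \<theta>) \<in> borel_measurable lam"
proof -
  have "(\<lambda>x. (\<lambda>j. (\<chi> i. rho (\<theta>$i) * (if j = i then 1 else 0) - \<theta>$i * rho (\<theta>$j))) (I x)) \<in> borel_measurable lam"
    by (rule measurable_compose[OF I_meas]) simp
  then show ?thesis unfolding Hfield_def by simp
qed

definition "SH = sqrt 2 * Rmax"

lemma SH_nonneg: "0 \<le> SH" unfolding SH_def using Rmax_pos by simp

lemma HF_bdd: "\<theta> \<in> Theta \<Longrightarrow> bdd (\<lambda>x. HF x \<theta>) SH"
  unfolding bdd_def SH_def using HF_norm by auto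

lemma pint_norm: "good pp \<Longrightarrow> bdd v S \<Longrightarrow> norm (\<integral>x. pp x *\<^sub>R v x \<partial>lam) \<le> S"
proof -
  assume g: "good pp" and b: "bdd v S"
  have "norm (\<integral>x. pp x *\<^sub>R v x \<partial>lam) \<le> (\<integral>x. pp x * S \<partial>lam)"
  proof (rule Bochner_Integration.integral_norm_bound_integral)
    show "integrable lam (\<lambda>x. pp x *\<^sub>R v x)" by (rule int_pv[OF g b])
    show "integrable lam (\<lambda>x. pp x * S)" using good_D(4)[OF g] by simp
    fix x assume "x \<in> space lam" then have x: "x \<in> X" using lam_space by simp
    show "norm (pp x *\<^sub>R v x) \<le> pp x * S" using good_D(2)[OF g x] bdd_le[OF b x]
      by (simp add: mult_left_mono)
  qed
  also have "\<dots> = S" using good_D(5)[OF g] by simp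
  finally show ?thesis .
qed

lemma hmean_eq: "hmean lam dens I rho \<theta> = (\<integral>x. p \<theta> x *\<^sub>R HF x \<theta> \<partial>lam)"
  unfolding hmean_def ..

abbreviation "ff \<theta> \<equiv> (\<lambda>x. HF x \<theta> - hmean lam dens I rho \<theta>)"

lemma ff_bdd: "\<theta> \<in> Theta \<Longrightarrow> bdd (ff \<theta>) (2 * SH)"
proof -
  assume th: "\<theta> \<in> Theta"
  have "norm (hmean lam dens I rho \<theta>) \<le> SH"
    unfolding hmean_eq by (rule pint_norm[OF good_p[OF th] HF_bdd[OF th]])
  then show ?thesis unfolding bdd_def using HF_bdd[OF th] unfolding bdd_def
    by (auto intro!: norm_triangle_le_diff)
qed

lemma ff_zero: "\<theta> \<in> Theta \<Longrightarrow> (\<integral>x. p \<theta> x *\<^sub>R ff \<theta> x \<partial>lam) = 0"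
proof -
  assume th: "\<theta> \<in> Theta"
  have i1: "integrable lam (\<lambda>x. p \<theta> x *\<^sub>R HF x \<theta>)" by (rule int_pv[OF good_p[OF th] HF_bdd[OF th]])
  have i2: "integrable lam (\<lambda>x. p \<theta> x *\<^sub>R hmean lam dens I rho \<theta>)"
    using good_D(4)[OF good_p[OF th]] by (rule integrable_scaleR_left)
  have i3: "(\<integral>x. p \<theta> x *\<^sub>R hmean lam dens I rho \<theta> \<partial>lam) = (\<integral>x. p \<theta> x \<partial>lam) *\<^sub>R hmean lam dens I rho \<theta>"
    by (rule integral_scaleR_left) (use good_D(4)[OF good_p[OF th]] in auto)
  have "(\<integral>x. p \<theta> x *\<^sub>R ff \<theta> x \<partial>lam) = (\<integral>x. p \<theta> x *\<^sub>R HF x \<theta> \<partial>lam) - (\<integral>x. p \<theta> x *\<^sub>R hmean lam dens I rho \<theta> \<partial>lam)"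
    using i1 i2 by (simp add: scaleR_diff_right)
  then show ?thesis unfolding i3 good_D(5)[OF good_p[OF th]] by (simp add: hmean_eq)
qed

definition "BH = 2 * SH / eps"

definition "Hh \<theta> = (SOME h. bdd h BH \<and> (\<forall>x\<in>X. h x - mh_apply lam q (p \<theta>) h x = ff \<theta> x)
             \<and> (\<integral>x. p \<theta> x *\<^sub>R h x \<partial>lam) = 0)"

lemma Hh: assumes th: "\<theta> \<in> Theta"
  shows "bdd (Hh \<theta>) BH" "\<forall>x\<in>X. Hh \<theta> x - mh_apply lam q (p \<theta>) (Hh \<theta>) x = ff \<theta> x"
    "(\<integral>x. p \<theta> x *\<^sub>R Hh \<theta> x \<partial>lam) = 0"
proof -
  have "\<exists>h. bdd h BH \<and> (\<forall>x\<in>X. h x - mh_apply lam q (p \<theta>) h x = ff \<theta> x)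
             \<and> (\<integral>x. p \<theta> x *\<^sub>R h x \<partial>lam) = 0"
    using poisson_exists[OF good_p[OF th] ff_bdd[OF th] ff_zero[OF th]] unfolding BH_def by simp
  from someI_ex[OF this] show "bdd (Hh \<theta>) BH" "\<forall>x\<in>X. Hh \<theta> x - mh_apply lam q (p \<theta>) (Hh \<theta>) x = ff \<theta> x"
    "(\<integral>x. p \<theta> x *\<^sub>R Hh \<theta> x \<partial>lam) = 0" unfolding Hh_def by auto
qed

lemma Hh_solves: "\<theta> \<in> Theta \<Longrightarrow> solves_poisson lam q dens I rho \<theta> (Hh \<theta>)"
  unfolding solves_poisson_def using Hh[of \<theta>] lam_space by (simp add: pi_rho_def)

lemma Hh_unique: "\<theta> \<in> Theta \<Longrightarrow> g \<in> borel_measurable lam \<Longrightarrow> bounded (g ` X)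
   \<Longrightarrow> solves_poisson lam q dens I rho \<theta> g \<Longrightarrow> \<forall>x\<in>X. g x = Hh \<theta> x"
proof -
  assume th: "\<theta> \<in> Theta" and gm: "g \<in> borel_measurable lam" and gb: "bounded (g ` X)"
    and sp: "solves_poisson lam q dens I rho \<theta> g"
  obtain a where a: "\<forall>x\<in>X. norm (g x) \<le> a" using gb unfolding bounded_iff by auto
  have bg: "bdd g a" unfolding bdd_def using gm a by auto
  show ?thesis
    by (rule poisson_unique[OF good_p[OF th] bg Hh(1)[OF th] _ _ Hh(2)[OF th] Hh(3)[OF th]])
       (use sp lam_space in \<open>auto simp: solves_poisson_def\<close>)
qed

end



lemma min_lemma:
  fixes u t :: real
  assumes u: "0 \<le> u" and t: "0 < t"
  shows "\<bar>min 1 u - min 1 (u * t)\<bar> \<le> \<bar>1 - t\<bar>"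
proof (cases "t \<le> 1")
  case True
  have ut: "u * t \<le> u" using u True by (simp add: mult_left_le)
  show ?thesis
  proof (cases "u \<le> 1")
    case True
    have "u - u * t = u * (1 - t)" by (simp add: algebra_simps)
    also have "\<dots> \<le> 1 * (1 - t)" using u \<open>t \<le> 1\<close> True by (intro mult_right_mono) auto
    finally have "u - u * t \<le> 1 - t" by simp
    then show ?thesis using True ut u t by (auto simp: min_def)
  next
    case False
    show ?thesis
    proof (cases "u * t \<le> 1")
      case True
      have "1 - u * t \<le> 1 - t" using False t by (simp add: mult_right_mono[of 1 u t])
      then show ?thesis using True False ut by (auto simp: min_def)
    next
      case False
      then show ?thesis using \<open>\<not> u \<le> 1\<close> by (auto simp: min_def)
    qed
  qed
next
  case False
  then have t1: "1 < t" by simp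
  have ut: "u \<le> u * t" using u t1 by (simp add: mult_le_cancel_left1)
  show ?thesis
  proof (cases "u * t \<le> 1")
    case True
    have u1: "u \<le> 1" using ut True by linarith
    have "u * t - u = u * (t - 1)" by (simp add: algebra_simps)
    also have "\<dots> \<le> 1 * (t - 1)" using u u1 t1 by (intro mult_right_mono) auto
    finally show ?thesis using True u1 ut t1 by (auto simp: min_def)
  next
    case False
    show ?thesis
    proof (cases "u \<le> 1")
      case True
      have "1 < u * t" using False by simp
      then have "1/t < u" using t1 by (simp add: divide_less_eq)
      have "1 - u \<le> 1 - 1/t" using \<open>1/t < u\<close> by simp
      also have "\<dots> = (t - 1) / t" using t1 by (simp add: diff_divide_distrib)
      also have "\<dots> \<le> (t - 1) / 1" using t1 by (intro divide_left_mono) auto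
      also have "\<dots> = t - 1" by simp
      finally show ?thesis using True False t1 by (auto simp: min_def)
    next
      case False
      then show ?thesis using \<open>\<not> u * t \<le> 1\<close> t1 by (auto simp: min_def)
    qed
  qed
qed

lemma ratio_lemma:
  fixes a b s :: real
  assumes a: "\<bar>1 - a\<bar> \<le> s" and b: "\<bar>1 - b\<bar> \<le> s" and s: "s \<le> 1/4"
  shows "\<bar>1 - a / b\<bar> \<le> 3 * s"
proof -
  have b0: "3/4 \<le> b" using b s by linarith
  have "1 - a / b = (b - a) / b" using b0 by (simp add: diff_divide_distrib)
  then have "\<bar>1 - a / b\<bar> = \<bar>b - a\<bar> / b" using b0 by simp
  also have "\<dots> \<le> (2 * s) / (3/4)"
    using a b b0 by (intro frac_le) auto
  also have "\<dots> \<le> 3 * s" using a by simp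
  finally show ?thesis .
qed


context MHset begin

lemma G_pi:
  fixes v :: "real^'D \<Rightarrow> 'b::{banach,second_countable_topology}"
  assumes g: "good pp" and g': "good pp'" and b: "bdd v S" and D: "\<forall>y\<in>X. \<bar>pp y - pp' y\<bar> \<le> D"
  shows "norm ((\<integral>x. pp x *\<^sub>R v x \<partial>lam) - (\<integral>x. pp' x *\<^sub>R v x \<partial>lam)) \<le> D * S * measure lam X"
proof -
  have i1: "integrable lam (\<lambda>x. pp x *\<^sub>R v x)" by (rule int_pv[OF g b])
  have i2: "integrable lam (\<lambda>x. pp' x *\<^sub>R v x)" by (rule int_pv[OF g' b])
  have "(\<integral>x. pp x *\<^sub>R v x \<partial>lam) - (\<integral>x. pp' x *\<^sub>R v x \<partial>lam) = (\<integral>x. pp x *\<^sub>R v x - pp' x *\<^sub>R v x \<partial>lam)"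
    using i1 i2 by simp
  also have "norm \<dots> \<le> (\<integral>x. D * S \<partial>lam)"
  proof (rule Bochner_Integration.integral_norm_bound_integral)
    show "integrable lam (\<lambda>x. pp x *\<^sub>R v x - pp' x *\<^sub>R v x)" using i1 i2 by simp
    show "integrable lam (\<lambda>x. D * S)" by simp
    fix x assume "x \<in> space lam" then have x: "x \<in> X" using lam_space by simp
    have "norm (pp x *\<^sub>R v x - pp' x *\<^sub>R v x) = \<bar>pp x - pp' x\<bar> * norm (v x)"
      by (simp add: scaleR_diff_left[symmetric])
    also have "\<dots> \<le> D * S" using D x bdd_le[OF b x] by (intro mult_mono) auto
    finally show "norm (pp x *\<^sub>R v x - pp' x *\<^sub>R v x) \<le> D * S" .
  qed
  also have "\<dots> = D * S * measure lam X" using lam_space by simp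
  finally show ?thesis .
qed

lemma G_P:
  fixes v :: "real^'D \<Rightarrow> 'b::{banach,second_countable_topology}"
  assumes g: "good pp" and g': "good pp'" and b: "bdd v S" and x: "x \<in> X"
    and A: "\<forall>y\<in>X. \<bar>mh_accept pp x y - mh_accept pp' x y\<bar> \<le> A"
  shows "norm (mh_apply lam q pp v x - mh_apply lam q pp' v x) \<le> 2 * A * S"
proof -
  have S: "0 \<le> S" by (rule bdd_nonneg[OF b])
  define a where "a y = mh_accept pp x y * q x y - mh_accept pp' x y * q x y" for y
  have ia: "integrable lam a" unfolding a_def using int_aq[OF g x] int_aq[OF g' x] by simp
  have iav: "integrable lam (\<lambda>y. a y *\<^sub>R v y)"
    unfolding a_def using int_aqv[OF g b x] int_aqv[OF g' b x] by (simp add: scaleR_diff_left)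
  have abnd: "\<bar>a y\<bar> \<le> A * q x y" if y: "y \<in> X" for y
  proof -
    have "\<bar>a y\<bar> = \<bar>mh_accept pp x y - mh_accept pp' x y\<bar> * q x y"
      unfolding a_def using q_nonneg x y by (simp add: left_diff_distrib[symmetric] abs_mult)
    also have "\<dots> \<le> A * q x y" using A y q_nonneg x by (intro mult_right_mono) auto
    finally show ?thesis .
  qed
  have iq: "integrable lam (\<lambda>y. A * q x y)" using q_density x by simp
  have eq: "mh_apply lam q pp v x - mh_apply lam q pp' v x
      = (\<integral>y. a y *\<^sub>R v y \<partial>lam) - (\<integral>y. a y \<partial>lam) *\<^sub>R v x"
    unfolding mh_apply_def a_def
    using int_aqv[OF g b x] int_aqv[OF g' b x] int_aq[OF g x] int_aq[OF g' x]
    by (simp add: scaleR_diff_left algebra_simps)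
  have n1: "norm (\<integral>y. a y *\<^sub>R v y \<partial>lam) \<le> (\<integral>y. A * q x y * S \<partial>lam)"
  proof (rule Bochner_Integration.integral_norm_bound_integral[OF iav])
    show "integrable lam (\<lambda>y. A * q x y * S)" using q_density x by simp
    fix y assume "y \<in> space lam" then have y: "y \<in> X" using lam_space by simp
    show "norm (a y *\<^sub>R v y) \<le> A * q x y * S"
      using abnd[OF y] bdd_le[OF b y] S by (simp add: mult_mono)
  qed
  have n2: "norm (\<integral>y. a y \<partial>lam) \<le> (\<integral>y. A * q x y \<partial>lam)"
  proof (rule Bochner_Integration.integral_norm_bound_integral[OF ia iq])
    fix y assume "y \<in> space lam" then have y: "y \<in> X" using lam_space by simp
    show "norm (a y) \<le> A * q x y" using abnd[OF y] by simp
  qed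
  have Aq: "(\<integral>y. A * q x y \<partial>lam) = A" using q_density x by simp
  have Aq2: "(\<integral>y. A * q x y * S \<partial>lam) = A * S" using q_density x by simp
  have n3: "norm ((\<integral>y. a y \<partial>lam) *\<^sub>R v x) \<le> A * S"
  proof -
    have "\<bar>\<integral>y. a y \<partial>lam\<bar> \<le> A" using n2 unfolding Aq by simp
    then have "\<bar>\<integral>y. a y \<partial>lam\<bar> * norm (v x) \<le> A * S"
      using bdd_le[OF b x] S by (intro mult_mono) auto
    then show ?thesis by simp
  qed
  show ?thesis unfolding eq
    by (rule order_trans[OF norm_triangle_ineq4]) (use n1 n3 Aq2 in linarith)
qed

definition "rr \<theta> \<theta>' i = rho (\<theta>'$i) / rho (\<theta>$i)"
definition "sig \<theta> \<theta>' = (\<Sum>i\<in>UNIV. \<bar>1 - rr \<theta> \<theta>' i\<bar>)"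

lemma sig_ge: "\<bar>1 - rr \<theta> \<theta>' i\<bar> \<le> sig \<theta> \<theta>'"
  unfolding sig_def by (rule member_le_sum) auto

lemma sig_nonneg: "0 \<le> sig \<theta> \<theta>'" unfolding sig_def by (simp add: sum_nonneg)

lemma HF_lip: assumes th: "\<theta> \<in> Theta" and th': "\<theta>' \<in> Theta"
  shows "norm (HF x \<theta> - HF x \<theta>') \<le> real CARD('d) * (2 * Rmax * (norm (\<theta> - \<theta>') + sig \<theta> \<theta>'))"
proof -
  let ?E = "norm (\<theta> - \<theta>') + sig \<theta> \<theta>'"
  have comp: "\<bar>(HF x \<theta> - HF x \<theta>')$i\<bar> \<le> 2 * Rmax * ?E" for i
  proof -
    let ?j = "I x"
    have dr: "\<bar>rho (\<theta>$k) - rho (\<theta>'$k)\<bar> \<le> Rmax * sig \<theta> \<theta>'" for k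
    proof -
      have rk: "0 < rho (\<theta>$k)" "rho (\<theta>$k) \<le> Rmax" using rho_th[OF th] by auto
      have "rho (\<theta>$k) - rho (\<theta>'$k) = rho (\<theta>$k) * (1 - rr \<theta> \<theta>' k)"
        unfolding rr_def using rk by (simp add: algebra_simps)
      then have "\<bar>rho (\<theta>$k) - rho (\<theta>'$k)\<bar> = rho (\<theta>$k) * \<bar>1 - rr \<theta> \<theta>' k\<bar>"
        using rk by (simp add: abs_mult)
      also have "\<dots> \<le> Rmax * sig \<theta> \<theta>'" using rk sig_ge[of \<theta> \<theta>' k] by (intro mult_mono) auto
      finally show ?thesis .
    qed
    have dt: "\<bar>\<theta>$i - \<theta>'$i\<bar> \<le> norm (\<theta> - \<theta>')"
      using component_le_norm_cart[of "\<theta> - \<theta>'" i] by simp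
    have t'i: "0 \<le> \<theta>'$i" "\<theta>'$i \<le> 1" using Theta_D[OF th', of i] by auto
    have rj: "0 < rho (\<theta>$?j)" "rho (\<theta>$?j) \<le> Rmax" using rho_th[OF th] by auto
    have e: "(HF x \<theta> - HF x \<theta>')$i = (rho (\<theta>$i) - rho (\<theta>'$i)) * (if ?j = i then 1 else 0)
        - ((\<theta>$i - \<theta>'$i) * rho (\<theta>$?j) + \<theta>'$i * (rho (\<theta>$?j) - rho (\<theta>'$?j)))"
      by (simp only: vector_minus_component HF_comp) (simp add: algebra_simps)
    have a1: "\<bar>(rho (\<theta>$i) - rho (\<theta>'$i)) * (if ?j = i then 1 else 0)\<bar> \<le> Rmax * sig \<theta> \<theta>'"
      using dr[of i] Rmax_pos sig_nonneg[of \<theta> \<theta>'] by auto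
    have a2: "\<bar>(\<theta>$i - \<theta>'$i) * rho (\<theta>$?j)\<bar> \<le> norm (\<theta> - \<theta>') * Rmax"
      using dt rj by (simp add: abs_mult mult_mono)
    have a3: "\<bar>\<theta>'$i * (rho (\<theta>$?j) - rho (\<theta>'$?j))\<bar> \<le> 1 * (Rmax * sig \<theta> \<theta>')"
    proof -
      have "\<theta>'$i * \<bar>rho (\<theta>$?j) - rho (\<theta>'$?j)\<bar> \<le> 1 * (Rmax * sig \<theta> \<theta>')"
        by (rule mult_mono) (use t'i dr[of ?j] in auto)
      then show ?thesis using t'i by (simp add: abs_mult)
    qed
    have "\<bar>(HF x \<theta> - HF x \<theta>')$i\<bar> \<le> Rmax * sig \<theta> \<theta>' + norm (\<theta> - \<theta>') * Rmax + 1 * (Rmax * sig \<theta> \<theta>')"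
      unfolding e using a1 a2 a3 by linarith
    also have "\<dots> \<le> 2 * Rmax * ?E" using Rmax_pos sig_nonneg[of \<theta> \<theta>'] norm_ge_zero[of "\<theta> - \<theta>'"]
      by (simp add: algebra_simps)
    finally show ?thesis .
  qed
  have "norm (HF x \<theta> - HF x \<theta>') \<le> (\<Sum>i\<in>UNIV. \<bar>(HF x \<theta> - HF x \<theta>')$i\<bar>)" by (rule norm_le_l1_cart)
  also have "\<dots> \<le> (\<Sum>i\<in>(UNIV::'d set). 2 * Rmax * ?E)" by (rule sum_mono) (rule comp)
  also have "\<dots> = real CARD('d) * (2 * Rmax * ?E)" by simp
  finally show ?thesis .
qed


lemma rr_bounds: "sig \<theta> \<theta>' \<le> 1/4 \<Longrightarrow> \<bar>1 - rr \<theta> \<theta>' i\<bar> \<le> sig \<theta> \<theta>' \<and> 3/4 \<le> rr \<theta> \<theta>' i"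
  using sig_ge[of \<theta> \<theta>' i] by auto

lemma rho_Z_sum: "rho (\<theta>$j) * Z \<theta> = (\<Sum>i\<in>UNIV. ts$i * (rho (\<theta>$j) / rho (\<theta>$i)))"
  unfolding Zrho_def by (simp add: sum_distrib_left mult_ac)

lemma p_alt: "p \<theta> x = dens x / (rho (\<theta> $ I x) * Z \<theta>)"
  unfolding pi_rho_def by simp

lemma L_p: assumes th: "\<theta> \<in> Theta" and th': "\<theta>' \<in> Theta" and s: "sig \<theta> \<theta>' \<le> 1/4" and x: "x \<in> X"
  shows "\<bar>p \<theta> x - p \<theta>' x\<bar> \<le> 12 * K * sig \<theta> \<theta>'"
proof -
  let ?j = "I x"
  let ?s = "sig \<theta> \<theta>'"
  define a where "a = rho (\<theta>$?j) * Z \<theta>"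
  define b where "b = rho (\<theta>'$?j) * Z \<theta>'"
  have a0: "0 < a" unfolding a_def using rho_th[OF th] Z_pos[OF th] by auto
  have b0: "0 < b" unfolding b_def using rho_th[OF th'] Z_pos[OF th'] by auto
  have s0: "0 \<le> ?s" by (rule sig_nonneg)
  have trm: "\<bar>ts$i * (rho (\<theta>'$?j) / rho (\<theta>'$i)) - ts$i * (rho (\<theta>$?j) / rho (\<theta>$i))\<bar>
      \<le> 3 * ?s * (ts$i * (rho (\<theta>$?j) / rho (\<theta>$i)))" for i
  proof -
    have pos: "0 < rho (\<theta>$i)" "0 < rho (\<theta>$?j)" "0 < rho (\<theta>'$i)" "0 < rho (\<theta>'$?j)"
      using rho_th[OF th] rho_th[OF th'] by auto
    have t: "0 < ts$i" using A1_strata by auto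
    have "ts$i * (rho (\<theta>'$?j) / rho (\<theta>'$i)) - ts$i * (rho (\<theta>$?j) / rho (\<theta>$i))
        = (ts$i * (rho (\<theta>$?j) / rho (\<theta>$i))) * (rr \<theta> \<theta>' ?j / rr \<theta> \<theta>' i - 1)"
      unfolding rr_def using pos by (simp add: field_simps)
    then have "\<bar>ts$i * (rho (\<theta>'$?j) / rho (\<theta>'$i)) - ts$i * (rho (\<theta>$?j) / rho (\<theta>$i))\<bar>
        = (ts$i * (rho (\<theta>$?j) / rho (\<theta>$i))) * \<bar>1 - rr \<theta> \<theta>' ?j / rr \<theta> \<theta>' i\<bar>"
      using pos t by (simp add: abs_mult abs_minus_commute)
    also have "\<dots> \<le> (ts$i * (rho (\<theta>$?j) / rho (\<theta>$i))) * (3 * ?s)"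
      using ratio_lemma[of "rr \<theta> \<theta>' ?j" ?s "rr \<theta> \<theta>' i"] rr_bounds[OF s] s pos t
      by (intro mult_left_mono) auto
    finally show ?thesis by (simp add: mult_ac)
  qed
  have "\<bar>b - a\<bar> \<le> 3 * ?s * a"
  proof -
    have "b - a = (\<Sum>i\<in>UNIV. ts$i * (rho (\<theta>'$?j) / rho (\<theta>'$i)) - ts$i * (rho (\<theta>$?j) / rho (\<theta>$i)))"
      unfolding a_def b_def rho_Z_sum by (simp add: sum_subtractf)
    also have "\<bar>\<dots>\<bar> \<le> (\<Sum>i\<in>UNIV. \<bar>ts$i * (rho (\<theta>'$?j) / rho (\<theta>'$i)) - ts$i * (rho (\<theta>$?j) / rho (\<theta>$i))\<bar>)"
      by (rule sum_abs)
    also have "\<dots> \<le> (\<Sum>i\<in>UNIV. 3 * ?s * (ts$i * (rho (\<theta>$?j) / rho (\<theta>$i))))"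
      by (rule sum_mono) (rule trm)
    also have "\<dots> = 3 * ?s * a" unfolding a_def rho_Z_sum by (simp add: sum_distrib_left)
    finally show ?thesis .
  qed
  moreover have "?s * a \<le> (1/4) * a" using s a0 by (intro mult_right_mono) auto
  ultimately have ab: "\<bar>b - a\<bar> \<le> 3 * ?s * a" "a / 4 \<le> b" by (auto simp: abs_le_iff)
  have d0: "0 \<le> dens x" using pi_nonneg x by auto
  have "p \<theta> x - p \<theta>' x = dens x * (b - a) / (a * b)"
    unfolding p_alt a_def[symmetric] b_def[symmetric] using a0 b0 by (simp add: field_simps)
  then have "\<bar>p \<theta> x - p \<theta>' x\<bar> = dens x * \<bar>b - a\<bar> / (a * b)"
    using a0 b0 d0 by (simp add: abs_mult abs_div_pos)
  also have "\<dots> \<le> dens x * (3 * ?s * a) / (a * (a / 4))"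
    using ab a0 b0 d0 s0 by (intro frac_le mult_left_mono mult_mono) auto
  also have "\<dots> = 12 * ?s * (dens x / a)" using a0 by (simp add: field_simps)
  also have "dens x / a = p \<theta> x" unfolding p_alt a_def ..
  also have "12 * ?s * p \<theta> x \<le> 12 * ?s * K" using p_le[OF th x] s0 by (intro mult_left_mono) auto
  finally show ?thesis by (simp add: mult_ac)
qed

lemma L_acc: assumes th: "\<theta> \<in> Theta" and th': "\<theta>' \<in> Theta" and s: "sig \<theta> \<theta>' \<le> 1/4"
    and x: "x \<in> X" and y: "y \<in> X"
  shows "\<bar>mh_accept (p \<theta>) x y - mh_accept (p \<theta>') x y\<bar> \<le> 3 * sig \<theta> \<theta>'"
proof -
  let ?j = "I x" and ?k = "I y"
  let ?s = "sig \<theta> \<theta>'"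
  have s0: "0 \<le> ?s" by (rule sig_nonneg)
  have pos: "0 < rho (\<theta>$?j)" "0 < rho (\<theta>$?k)" "0 < rho (\<theta>'$?j)" "0 < rho (\<theta>'$?k)"
    "0 < Z \<theta>" "0 < Z \<theta>'"
    using rho_th[OF th] rho_th[OF th'] Z_pos[OF th] Z_pos[OF th'] by auto
  show ?thesis
  proof (cases "0 < dens x")
    case False
    then have "dens x = 0" using pi_nonneg x by force
    then have "\<not> 0 < p \<theta> x" "\<not> 0 < p \<theta>' x" unfolding p_alt by auto
    then show ?thesis unfolding mh_accept_def using s0 by simp
  next
    case True
    have px: "0 < p \<theta> x" "0 < p \<theta>' x" unfolding p_alt using True pos by auto
    have dy: "0 \<le> dens y" using pi_nonneg y by auto
    define u where "u = p \<theta> y / p \<theta> x"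
    have u0: "0 \<le> u" unfolding u_def p_alt using dy True pos by auto
    have rr: "0 < rr \<theta> \<theta>' ?j / rr \<theta> \<theta>' ?k" unfolding rr_def using pos by auto
    have eq: "p \<theta>' y / p \<theta>' x = u * (rr \<theta> \<theta>' ?j / rr \<theta> \<theta>' ?k)"
      unfolding u_def p_alt rr_def using pos True by (simp add: field_simps)
    have "\<bar>mh_accept (p \<theta>) x y - mh_accept (p \<theta>') x y\<bar> = \<bar>min 1 u - min 1 (u * (rr \<theta> \<theta>' ?j / rr \<theta> \<theta>' ?k))\<bar>"
      unfolding mh_accept_def using px eq u_def by simp
    also have "\<dots> \<le> \<bar>1 - rr \<theta> \<theta>' ?j / rr \<theta> \<theta>' ?k\<bar>" by (rule min_lemma[OF u0 rr])
    also have "\<dots> \<le> 3 * ?s" using ratio_lemma[of "rr \<theta> \<theta>' ?j" ?s "rr \<theta> \<theta>' ?k"] rr_bounds[OF s] s by auto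
    finally show ?thesis .
  qed
qed

end



context MHset begin

definition "CH = real CARD('d) * (2 * Rmax)"
definition "mX = measure lam X"
definition "Cf = 2 * CH + 12 * K * SH * mX"
definition "Cpi = 12 * K * BH * mX"
definition "C1 = 2 * (Cf + eps * Cpi + 6 * BH) / eps + Cf"
definition "C2 = 16 * BH"

lemma consts_nonneg: "0 \<le> CH" "0 \<le> mX" "0 \<le> Cf" "0 \<le> Cpi" "0 \<le> BH" "0 \<le> C1" "0 \<le> C2"
proof -
  show a: "0 \<le> CH" unfolding CH_def using Rmax_pos by simp
  show b: "0 \<le> mX" unfolding mX_def by simp
  show c: "0 \<le> BH" unfolding BH_def using SH_nonneg eps by simp
  show d: "0 \<le> Cf" unfolding Cf_def using a b SH_nonneg K by simp
  show e: "0 \<le> Cpi" unfolding Cpi_def using b c K by simp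
  show "0 \<le> C1" unfolding C1_def using c d e eps by simp
  show "0 \<le> C2" unfolding C2_def using c by simp
qed

lemma sig_eq: "sig \<theta> \<theta>' = (\<Sum>i\<in>UNIV. \<bar>1 - rho (\<theta>'$i) / rho (\<theta>$i)\<bar>)"
  unfolding sig_def rr_def ..

lemma HFd_bdd: "\<theta> \<in> Theta \<Longrightarrow> \<theta>' \<in> Theta \<Longrightarrow> bdd (\<lambda>x. HF x \<theta> - HF x \<theta>') (CH * (norm (\<theta> - \<theta>') + sig \<theta> \<theta>'))"
  unfolding bdd_def CH_def using HF_lip by (auto simp: mult_ac)

lemma norm4: "norm (a + b + c + d) \<le> norm a + norm b + norm c + norm (d::'b::real_normed_vector)"
  using norm_triangle_ineq[of "a+b+c" d] norm_triangle_ineq[of "a+b" c] norm_triangle_ineq[of a b] by linarith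

lemma lip_small:
  assumes th: "\<theta> \<in> Theta" and th': "\<theta>' \<in> Theta" and s: "sig \<theta> \<theta>' \<le> 1/4" and x: "x \<in> X"
  shows "norm (Hh \<theta> x - Hh \<theta>' x)
     + norm (mh_apply lam q (p \<theta>) (Hh \<theta>) x - mh_apply lam q (p \<theta>') (Hh \<theta>') x)
     \<le> C1 * (norm (\<theta> - \<theta>') + sig \<theta> \<theta>')"
proof -
  define E where "E = norm (\<theta> - \<theta>') + sig \<theta> \<theta>'"
  have E: "sig \<theta> \<theta>' \<le> E" "norm (\<theta> - \<theta>') \<le> E" "0 \<le> E" unfolding E_def using sig_nonneg[of \<theta> \<theta>'] by auto
  have g: "good (p \<theta>)" and g': "good (p \<theta>')" using good_p th th' by auto
  have hb: "bdd (Hh \<theta>) BH" and hb': "bdd (Hh \<theta>') BH" using Hh(1) th th' by auto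
  have K0: "0 \<le> K" using K by simp
  have Dp: "\<forall>y\<in>X. \<bar>p \<theta> y - p \<theta>' y\<bar> \<le> 12 * K * E"
  proof
    fix y assume y: "y \<in> X"
    have "12 * K * sig \<theta> \<theta>' \<le> 12 * K * E" using E K0 by (intro mult_left_mono) auto
    then show "\<bar>p \<theta> y - p \<theta>' y\<bar> \<le> 12 * K * E" using L_p[OF th th' s y] by linarith
  qed
  have Dacc: "\<forall>y\<in>X. \<bar>mh_accept (p \<theta>) z y - mh_accept (p \<theta>') z y\<bar> \<le> 3 * E" if z: "z \<in> X" for z
    using L_acc[OF th th' s z] E by force
  have Df: "norm (ff \<theta> z - ff \<theta>' z) \<le> Cf * E" if z: "z \<in> X" for z
  proof -
    have h1: "norm (HF z \<theta> - HF z \<theta>') \<le> CH * E" using HFd_bdd[OF th th'] z unfolding bdd_def E_def by auto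
    have h2: "norm ((\<integral>y. p \<theta> y *\<^sub>R HF y \<theta> \<partial>lam) - (\<integral>y. p \<theta>' y *\<^sub>R HF y \<theta> \<partial>lam)) \<le> 12 * K * E * SH * mX"
      unfolding mX_def by (rule G_pi[OF g g' HF_bdd[OF th] Dp])
    have h3: "norm (\<integral>y. p \<theta>' y *\<^sub>R (HF y \<theta> - HF y \<theta>') \<partial>lam) \<le> CH * E"
      using pint_norm[OF g' HFd_bdd[OF th th']] unfolding E_def .
    have hm: "hmean lam dens I rho \<theta> - hmean lam dens I rho \<theta>'
       = ((\<integral>y. p \<theta> y *\<^sub>R HF y \<theta> \<partial>lam) - (\<integral>y. p \<theta>' y *\<^sub>R HF y \<theta> \<partial>lam))
         + (\<integral>y. p \<theta>' y *\<^sub>R (HF y \<theta> - HF y \<theta>') \<partial>lam)"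
      unfolding hmean_eq using int_pv[OF g' HF_bdd[OF th]] int_pv[OF g' HF_bdd[OF th']]
      by (simp add: scaleR_diff_right)
    have hh: "norm (hmean lam dens I rho \<theta> - hmean lam dens I rho \<theta>') \<le> 12 * K * E * SH * mX + CH * E"
      unfolding hm by (rule norm_triangle_le) (use h2 h3 in linarith)
    have eqff: "ff \<theta> z - ff \<theta>' z = (HF z \<theta> - HF z \<theta>') - (hmean lam dens I rho \<theta> - hmean lam dens I rho \<theta>')"
      by simp
    have "norm (ff \<theta> z - ff \<theta>' z) \<le> CH * E + (12 * K * E * SH * mX + CH * E)"
      unfolding eqff
      using h1 hh norm_triangle_ineq4[of "HF z \<theta> - HF z \<theta>'" "hmean lam dens I rho \<theta> - hmean lam dens I rho \<theta>'"]
      by linarith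
    then show ?thesis unfolding Cf_def by (simp add: algebra_simps)
  qed
  define u where "u = (\<lambda>z. Hh \<theta> z - Hh \<theta>' z)"
  have ub: "bdd u (BH + BH)" unfolding u_def by (rule bdd_diff[OF hb hb'])
  have Ppi: "norm (\<integral>y. p \<theta> y *\<^sub>R u y \<partial>lam) \<le> Cpi * E"
  proof -
    have "(\<integral>y. p \<theta> y *\<^sub>R u y \<partial>lam) = (\<integral>y. p \<theta>' y *\<^sub>R Hh \<theta>' y \<partial>lam) - (\<integral>y. p \<theta> y *\<^sub>R Hh \<theta>' y \<partial>lam)"
      unfolding u_def using int_pv[OF g hb] int_pv[OF g hb'] Hh(3)[OF th] Hh(3)[OF th']
      by (simp add: scaleR_diff_right)
    also have "norm \<dots> \<le> 12 * K * E * BH * mX"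
      unfolding mX_def by (subst norm_minus_commute) (rule G_pi[OF g g' hb' Dp])
    finally show ?thesis unfolding Cpi_def by (simp add: mult_ac)
  qed
  define delta where "delta = (Cf + eps * Cpi + 6 * BH) * E"
  have ueq: "u z = (ff \<theta> z - ff \<theta>' z)
        + (mh_apply lam q (p \<theta>) u z - eps *\<^sub>R (\<integral>y. p \<theta> y *\<^sub>R u y \<partial>lam))
        + eps *\<^sub>R (\<integral>y. p \<theta> y *\<^sub>R u y \<partial>lam)
        + (mh_apply lam q (p \<theta>) (Hh \<theta>') z - mh_apply lam q (p \<theta>') (Hh \<theta>') z)" if z: "z \<in> X" for z
  proof -
    have a1: "Hh \<theta> z = ff \<theta> z + mh_apply lam q (p \<theta>) (Hh \<theta>) z" using Hh(2)[OF th] z by (simp add: diff_eq_eq)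
    have a2: "Hh \<theta>' z = ff \<theta>' z + mh_apply lam q (p \<theta>') (Hh \<theta>') z" using Hh(2)[OF th'] z by (simp add: diff_eq_eq)
    have a3: "mh_apply lam q (p \<theta>) u z = mh_apply lam q (p \<theta>) (Hh \<theta>) z - mh_apply lam q (p \<theta>) (Hh \<theta>') z"
      unfolding u_def by (rule P_diff[OF g hb hb' z])
    have "u z = (ff \<theta> z + mh_apply lam q (p \<theta>) (Hh \<theta>) z) - (ff \<theta>' z + mh_apply lam q (p \<theta>') (Hh \<theta>') z)"
      unfolding u_def by (simp only: a1 a2)
    then show ?thesis unfolding a3 by (simp add: algebra_simps)
  qed
  have ubnd: "\<forall>z\<in>X. norm (u z) \<le> delta / (1 - (1 - eps))"
  proof (rule sup_trick)
    show "\<forall>z\<in>X. norm (u z) \<le> BH + BH" using ub unfolding bdd_def by auto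
    fix S z assume S: "\<forall>y\<in>X. norm (u y) \<le> S" and z: "z \<in> X"
    have bS: "bdd u S" using S ub unfolding bdd_def by auto
    have t1: "norm (ff \<theta> z - ff \<theta>' z) \<le> Cf * E" by (rule Df[OF z])
    have t2: "norm (mh_apply lam q (p \<theta>) u z - eps *\<^sub>R (\<integral>y. p \<theta> y *\<^sub>R u y \<partial>lam)) \<le> (1 - eps) * S"
      by (rule Q_norm[OF g bS z])
    have t3: "norm (eps *\<^sub>R (\<integral>y. p \<theta> y *\<^sub>R u y \<partial>lam)) \<le> eps * (Cpi * E)"
      using Ppi eps by (simp add: mult_left_mono)
    have t4: "norm (mh_apply lam q (p \<theta>) (Hh \<theta>') z - mh_apply lam q (p \<theta>') (Hh \<theta>') z) \<le> 2 * (3 * E) * BH"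
      using G_P[OF g g' hb' z Dacc[OF z]] .
    have "norm (u z) \<le> Cf * E + (1 - eps) * S + eps * (Cpi * E) + 2 * (3 * E) * BH"
      unfolding ueq[OF z] by (rule order_trans[OF norm4]) (use t1 t2 t3 t4 in linarith)
    then show "norm (u z) \<le> delta + (1 - eps) * S" unfolding delta_def by (simp add: algebra_simps)
  qed (use eps in auto)
  have u1: "norm (u x) \<le> delta / eps" using ubnd x by simp
  have e1: "Hh \<theta> x - mh_apply lam q (p \<theta>) (Hh \<theta>) x = ff \<theta> x" using Hh(2)[OF th] x by blast
  have e2: "Hh \<theta>' x - mh_apply lam q (p \<theta>') (Hh \<theta>') x = ff \<theta>' x" using Hh(2)[OF th'] x by blast
  have "mh_apply lam q (p \<theta>) (Hh \<theta>) x - mh_apply lam q (p \<theta>') (Hh \<theta>') x = u x - (ff \<theta> x - ff \<theta>' x)"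
    unfolding u_def e1[symmetric] e2[symmetric] by (simp add: algebra_simps)
  then have u2: "norm (mh_apply lam q (p \<theta>) (Hh \<theta>) x - mh_apply lam q (p \<theta>') (Hh \<theta>') x) \<le> delta / eps + Cf * E"
    using u1 Df[OF x] norm_triangle_ineq4[of "u x" "ff \<theta> x - ff \<theta>' x"] by simp
  have "norm (u x) + norm (mh_apply lam q (p \<theta>) (Hh \<theta>) x - mh_apply lam q (p \<theta>') (Hh \<theta>') x)
      \<le> delta / eps + (delta / eps + Cf * E)" using u1 u2 by linarith
  also have "\<dots> = C1 * E" unfolding delta_def C1_def using eps by (simp add: field_simps)
  finally show ?thesis unfolding u_def E_def .
qed

end

context MHset begin

lemma lip_all:
  assumes th: "\<theta> \<in> Theta" and th': "\<theta>' \<in> Theta" and x: "x \<in> X"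
  shows "norm (Hh \<theta> x - Hh \<theta>' x)
     + norm (mh_apply lam q (p \<theta>) (Hh \<theta>) x - mh_apply lam q (p \<theta>') (Hh \<theta>') x)
     \<le> (C1 + C2) * (norm (\<theta> - \<theta>') + (\<Sum>i\<in>UNIV. \<bar>1 - rho (\<theta>'$i) / rho (\<theta>$i)\<bar>))"
proof -
  define E where "E = norm (\<theta> - \<theta>') + sig \<theta> \<theta>'"
  have E0: "0 \<le> E" unfolding E_def using sig_nonneg[of \<theta> \<theta>'] by simp
  have c: "0 \<le> C1" "0 \<le> C2" "0 \<le> BH" using consts_nonneg by auto
  have "norm (Hh \<theta> x - Hh \<theta>' x)
     + norm (mh_apply lam q (p \<theta>) (Hh \<theta>) x - mh_apply lam q (p \<theta>') (Hh \<theta>') x) \<le> (C1 + C2) * E"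
  proof (cases "sig \<theta> \<theta>' \<le> 1/4")
    case True
    have "C1 * E \<le> (C1 + C2) * E" using c E0 by (intro mult_right_mono) auto
    then show ?thesis using lip_small[OF th th' True x] unfolding E_def by linarith
  next
    case False
    then have E4: "1/4 < E" unfolding E_def using norm_ge_zero[of "\<theta> - \<theta>'"] by linarith
    have g: "good (p \<theta>)" and g': "good (p \<theta>')" using good_p th th' by auto
    have hb: "bdd (Hh \<theta>) BH" and hb': "bdd (Hh \<theta>') BH" using Hh(1) th th' by auto
    have "norm (Hh \<theta> x - Hh \<theta>' x) \<le> BH + BH"
      using bdd_le[OF hb x] bdd_le[OF hb' x] norm_triangle_ineq4[of "Hh \<theta> x" "Hh \<theta>' x"] by linarith
    moreover have "norm (mh_apply lam q (p \<theta>) (Hh \<theta>) x - mh_apply lam q (p \<theta>') (Hh \<theta>') x) \<le> BH + BH"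
      using P_norm[OF g hb x] P_norm[OF g' hb' x]
        norm_triangle_ineq4[of "mh_apply lam q (p \<theta>) (Hh \<theta>) x" "mh_apply lam q (p \<theta>') (Hh \<theta>') x"] by linarith
    moreover have "4 * BH \<le> C2 * E"
    proof -
      have "16 * BH * (1/4) \<le> 16 * BH * E" using E4 c by (intro mult_left_mono) auto
      then show ?thesis unfolding C2_def by simp
    qed
    moreover have "C2 * E \<le> (C1 + C2) * E" using c E0 by (intro mult_right_mono) auto
    ultimately show ?thesis by linarith
  qed
  then show ?thesis unfolding E_def sig_eq .
qed

end

theorem lemma6p4:
  fixes X :: "(real^'D) set"
    and lam :: "(real^'D) measure"
    and dens :: "real^'D \<Rightarrow> real"
    and I :: "real^'D \<Rightarrow> 'd::finite"
    and rho :: "real \<Rightarrow> real"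
    and q :: "real^'D \<Rightarrow> real^'D \<Rightarrow> real"
  assumes X_meas: "X \<in> sets borel"
    and lam_space: "space lam = X"
    and lam_sets: "sets lam = sets (restrict_space borel X)"
    and pi_meas: "dens \<in> borel_measurable lam"
    and pi_nonneg: "\<forall>x\<in>X. 0 \<le> dens x"
    and pi_int: "integrable lam dens"
    and pi_prob: "(\<integral>x. dens x \<partial>lam) = 1"
    and strata_meas: "\<forall>i. {x\<in>X. I x = i} \<in> sets lam"
    and rho_meas: "rho \<in> borel_measurable (restrict_space borel {0<..<1})"
    and rho_pos: "\<forall>t\<in>{0<..<1}. 0 < rho t"
    \<comment> \<open>A1\<close>
    and A1_bdd: "bdd_above (dens ` X)"
    and A1_strata: "\<forall>i. 0 < theta_star lam dens I $ i"
    \<comment> \<open>A2: symmetric proposal density bounded below\<close>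
    and q_meas: "(\<lambda>(x, y). q x y) \<in> borel_measurable (lam \<Otimes>\<^sub>M lam)"
    and q_nonneg: "\<forall>x\<in>X. \<forall>y\<in>X. 0 \<le> q x y"
    and q_density: "\<forall>x\<in>X. integrable lam (q x) \<and> (\<integral>y. q x y \<partial>lam) = 1"
    and q_sym: "\<forall>x\<in>X. \<forall>y\<in>X. q x y = q y x"
    and q_inf: "\<exists>c>0. \<forall>x\<in>X. \<forall>y\<in>X. c \<le> q x y"
    \<comment> \<open>R2\<close>
    and R2: "bdd_above (rho ` {0<..<1})"
  shows "(\<forall>\<theta>\<in>Theta. \<forall>x\<in>X. norm (Hfield rho I x \<theta>) \<le> sqrt 2 * (SUP t\<in>{0<..<1}. rho t))
     \<and> (\<exists>Hh :: real^'d \<Rightarrow> real^'D \<Rightarrow> real^'d.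
          (\<forall>\<theta>\<in>Theta.
             Hh \<theta> \<in> borel_measurable lam \<and> bounded (Hh \<theta> ` X)
             \<and> solves_poisson lam q dens I rho \<theta> (Hh \<theta>)
             \<and> (\<forall>g. g \<in> borel_measurable lam \<and> bounded (g ` X)
                    \<and> solves_poisson lam q dens I rho \<theta> g \<longrightarrow> (\<forall>x\<in>X. g x = Hh \<theta> x)))
        \<and> (\<exists>B. \<forall>\<theta>\<in>Theta. \<forall>x\<in>X. norm (Hh \<theta> x) \<le> B)
        \<and> (\<exists>C. \<forall>\<theta>\<in>Theta. \<forall>\<theta>'\<in>Theta. \<forall>x\<in>X.
              norm (Hh \<theta> x - Hh \<theta>' x)
              + norm (mh_apply lam q (pi_rho lam dens I rho \<theta>) (Hh \<theta>) x
                      - mh_apply lam q (pi_rho lam dens I rho \<theta>') (Hh \<theta>') x)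
              \<le> C * (norm (\<theta> - \<theta>') + (\<Sum>i\<in>UNIV. \<bar>1 - rho (\<theta>'$i) / rho (\<theta>$i)\<bar>))))"
proof -
  interpret M: MHset X lam dens I rho q
    by (unfold_locales) (use lam_space pi_meas pi_nonneg pi_int pi_prob strata_meas rho_pos A1_bdd
        A1_strata q_meas q_nonneg q_density q_sym q_inf R2 in auto)
  have part1: "\<forall>\<theta>\<in>Theta. \<forall>x\<in>X. norm (Hfield rho I x \<theta>) \<le> sqrt 2 * (SUP t\<in>{0<..<1}. rho t)"
    using M.HF_norm unfolding M.Rmax_def by auto
  have part2: "\<forall>\<theta>\<in>Theta.
             M.Hh \<theta> \<in> borel_measurable lam \<and> bounded (M.Hh \<theta> ` X)
             \<and> solves_poisson lam q dens I rho \<theta> (M.Hh \<theta>)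
             \<and> (\<forall>g. g \<in> borel_measurable lam \<and> bounded (g ` X)
                    \<and> solves_poisson lam q dens I rho \<theta> g \<longrightarrow> (\<forall>x\<in>X. g x = M.Hh \<theta> x))"
  proof (intro ballI conjI)
    fix \<theta> :: "real^'d" assume th: "\<theta> \<in> Theta"
    have hb: "M.bdd (M.Hh \<theta>) M.BH" using M.Hh(1)[OF th] .
    show "M.Hh \<theta> \<in> borel_measurable lam" using M.bdd_meas[OF hb] .
    show "bounded (M.Hh \<theta> ` X)" unfolding bounded_iff using hb unfolding M.bdd_def by auto
    show "solves_poisson lam q dens I rho \<theta> (M.Hh \<theta>)" by (rule M.Hh_solves[OF th])
    show "\<forall>g. g \<in> borel_measurable lam \<and> bounded (g ` X)
                    \<and> solves_poisson lam q dens I rho \<theta> g \<longrightarrow> (\<forall>x\<in>X. g x = M.Hh \<theta> x)"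
      using M.Hh_unique[OF th] by blast
  qed
  have part3: "\<exists>B. \<forall>\<theta>\<in>Theta. \<forall>x\<in>X. norm (M.Hh \<theta> x) \<le> B"
    using M.Hh(1) unfolding M.bdd_def by blast
  have part4: "\<exists>C. \<forall>\<theta>\<in>Theta. \<forall>\<theta>'\<in>Theta. \<forall>x\<in>X.
              norm (M.Hh \<theta> x - M.Hh \<theta>' x)
              + norm (mh_apply lam q (pi_rho lam dens I rho \<theta>) (M.Hh \<theta>) x
                      - mh_apply lam q (pi_rho lam dens I rho \<theta>') (M.Hh \<theta>') x)
              \<le> C * (norm (\<theta> - \<theta>') + (\<Sum>i\<in>UNIV. \<bar>1 - rho (\<theta>'$i) / rho (\<theta>$i)\<bar>))"
    using M.lip_all by blast
  show ?thesis using part1 part2 part3 part4 by blast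
qed


end
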